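(* Let $m\ge2$, $D=\mathrm{diag}(d_1,\dots,d_m)$ with $d_1<\dots<d_m$, $\beta_1,\beta_2$ nonzero reals, $\mathbf v_1,\mathbf v_2\in\mathbb R^m$ (entries $v_{1q},v_{2q}$), with $\{1,\dots,m\}$ partitioned into $J_1,J_2,J_3$ such that $\mathbf v_1$ vanishes on $J_3$ and $\mathbf v_2$ vanishes on $J_1$; let $M=D+\beta_1\mathbf v_1\mathbf v_1^T+\beta_2\mathbf v_2\mathbf v_2^T$ and assume no $d_i$ is an eigenvalue of $M$. Let $j\in\{1,\dots,m-1\}$, $k\in\{1,\dots,m-j\}$. If $g_j^+g_{j+k}^-<0$, then $M$ has exactly $k$ eigenvalues (with multiplicity) in $I_{j,j+k}$. If $g_j^+g_{j+k}^->0$, then $M$ has either $k-1$ or $k+1$ eigenvalues (with multiplicity) in $I_{j,j+k}$. In particular, for $k=1$: $(d_j,d_{j+1})$ contains exactly one eigenvalue if $g_j^+g_{j+1}^-<0$, and zero or two eigenvalues if $g_j^+g_{j+1}^->0$.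
   Context: $I_{j,j+k}:=(d_j,d_{j+k})\setminus\{d_{j+1},\dots,d_{j+k-1}\}$. For each $i$, $g_i^+:=-\beta_1\beta_2\sum_{q\neq i}\frac{(v_{1q}v_{2i}-v_{1i}v_{2q})^2}{d_q-d_i}-\beta_1v_{1i}^2-\beta_2v_{2i}^2$ and $g_i^-:=-g_i^+$. (These are the coefficients of $1/\epsilon$ in the secular function $f(\lambda)=\beta_1\beta_2\sum_{q<r}\frac{(v_{1q}v_{2r}-v_{1r}v_{2q})^2}{(\lambda-d_q)(\lambda-d_r)}-\sum_q\frac{\beta_1v_{1q}^2+\beta_2v_{2q}^2}{\lambda-d_q}+1$ at $\lambda=d_i+\epsilon$ and $\lambda=d_i-\epsilon$ respectively, so they give the signs of $f(d_i^+)$ and $f(d_i^-)$.) *)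

theory Defs
  imports Complex_Main "Jordan_Normal_Form.Char_Poly"
begin

text \<open>Indices are 0-based: the paper's index i in {1..m} corresponds to i-1 in {0..<m}.\<close>

definition rank2_mod :: "nat \<Rightarrow> (nat \<Rightarrow> real) \<Rightarrow> real \<Rightarrow> real \<Rightarrow> (nat \<Rightarrow> real) \<Rightarrow> (nat \<Rightarrow> real) \<Rightarrow> real mat" where
  "rank2_mod m d \<beta>1 \<beta>2 v1 v2 = mat m m (\<lambda>(p, q).
      (if p = q then d p else 0) + \<beta>1 * v1 p * v1 q + \<beta>2 * v2 p * v2 q)"

definition g_plus :: "nat \<Rightarrow> (nat \<Rightarrow> real) \<Rightarrow> real \<Rightarrow> real \<Rightarrow> (nat \<Rightarrow> real) \<Rightarrow> (nat \<Rightarrow> real) \<Rightarrow> nat \<Rightarrow> real" where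
  "g_plus m d \<beta>1 \<beta>2 v1 v2 i =
     - \<beta>1 * \<beta>2 * (\<Sum>q\<in>{..<m} - {i}. (v1 q * v2 i - v1 i * v2 q)^2 / (d q - d i))
     - \<beta>1 * (v1 i)^2 - \<beta>2 * (v2 i)^2"

definition g_minus :: "nat \<Rightarrow> (nat \<Rightarrow> real) \<Rightarrow> real \<Rightarrow> real \<Rightarrow> (nat \<Rightarrow> real) \<Rightarrow> (nat \<Rightarrow> real) \<Rightarrow> nat \<Rightarrow> real" where
  "g_minus m d \<beta>1 \<beta>2 v1 v2 i = - g_plus m d \<beta>1 \<beta>2 v1 v2 i"

definition I_int :: "(nat \<Rightarrow> real) \<Rightarrow> nat \<Rightarrow> nat \<Rightarrow> real set" where
  "I_int d j k = {x. d j < x \<and> x < d (j + k) \<and> (\<forall>i. j < i \<and> i < j + k \<longrightarrow> x \<noteq> d i)}"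

definition eig_count :: "real mat \<Rightarrow> real set \<Rightarrow> nat" where
  "eig_count A S = (\<Sum>x\<in>{x \<in> S. poly (char_poly A) x = 0}. order x (char_poly A))"

end

theory Submission
  imports Defs
begin

hide_const (open) Module.module.smult



definition cnt :: "real poly \<Rightarrow> real set \<Rightarrow> nat" where
  "cnt F A = (\<Sum>r\<in>{r. poly F r = 0 \<and> r \<in> A}. Polynomial.order r F)"

lemma cnt_alt: "(F::real poly) \<noteq> 0 \<Longrightarrow> cnt F A = (\<Sum>r\<in>{r. poly F r = 0} \<inter> A. Polynomial.order r F)"
  unfolding cnt_def by (rule sum.cong) auto

lemma cnt_fin: "(F::real poly) \<noteq> 0 \<Longrightarrow> finite {r. poly F r = 0 \<and> r \<in> A}"
  using poly_roots_finite[of F] by (rule rev_finite_subset) auto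

lemma cnt_union:
  assumes "F \<noteq> 0" "A \<inter> B = {}"
  shows "cnt F (A \<union> B) = cnt F A + cnt F B"
proof -
  have "{r. poly F r = 0 \<and> r \<in> A \<union> B} = {r. poly F r = 0 \<and> r \<in> A} \<union> {r. poly F r = 0 \<and> r \<in> B}" by auto
  then show ?thesis unfolding cnt_def using assms cnt_fin[OF assms(1)]
    by (simp add: sum.union_disjoint disjoint_iff)
qed

lemma cnt_mono:
  assumes "F \<noteq> 0" "A \<subseteq> B"
  shows "cnt F A \<le> cnt F B"
  unfolding cnt_def by (rule sum_mono2[OF cnt_fin[OF assms(1)]]) (use assms in auto)

lemma cnt_le_degree:
  assumes "F \<noteq> 0" shows "cnt F A \<le> degree F"
proof -
  have "cnt F A \<le> cnt F UNIV" by (rule cnt_mono[OF assms]) auto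
  also have "cnt F UNIV = (\<Sum>x | poly F x = 0. Polynomial.order x F)" unfolding cnt_def by simp
  also have "\<dots> \<le> degree F" by (rule sum_order_le_degree[OF assms])
  finally show ?thesis .
qed

lemma cnt_root:
  assumes "F \<noteq> 0" "poly F r = 0" "r \<in> A"
  shows "cnt F A \<ge> 1"
proof -
  have "Polynomial.order r F \<ge> 1" using order_gt_0_iff[OF assms(1), of r] assms(2) by simp
  also have "Polynomial.order r F \<le> cnt F A" unfolding cnt_def
    by (rule member_le_sum) (use assms cnt_fin[OF assms(1)] in auto)
  finally show ?thesis .
qed

lemma cnt_mult:
  assumes "F \<noteq> 0" "G \<noteq> 0"
  shows "cnt (F * G) A = cnt F A + cnt G A"
proof -
  let ?R = "{r. poly (F*G) r = 0 \<and> r \<in> A}"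
  have fin: "finite ?R" using cnt_fin[of "F*G"] assms by auto
  have "cnt (F*G) A = (\<Sum>r\<in>?R. Polynomial.order r F + Polynomial.order r G)"
    unfolding cnt_def using assms by (intro sum.cong) (auto simp: order_mult)
  also have "\<dots> = (\<Sum>r\<in>?R. Polynomial.order r F) + (\<Sum>r\<in>?R. Polynomial.order r G)" by (simp add: sum.distrib)
  also have "(\<Sum>r\<in>?R. Polynomial.order r F) = cnt F A" unfolding cnt_def
    by (rule sum.mono_neutral_right[OF fin]) (use assms in \<open>auto simp: order_gt_0_iff intro: order_0I\<close>)
  also have "(\<Sum>r\<in>?R. Polynomial.order r G) = cnt G A" unfolding cnt_def
    by (rule sum.mono_neutral_right[OF fin]) (use assms in \<open>auto simp: order_gt_0_iff intro: order_0I\<close>)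
  finally show ?thesis .
qed

lemma cnt_lin: "cnt [:-c, 1:] A = (if c \<in> A then 1 else 0)"
proof -
  have "{r. poly [:-c, 1:] r = 0 \<and> r \<in> A} = (if c \<in> A then {c} else {})" by auto
  moreover have "Polynomial.order c [:-c,1:] = 1" using order_power_n_n[of c 1] by simp
  ultimately show ?thesis unfolding cnt_def by auto
qed

lemma cnt_smult: "(c::real) \<noteq> 0 \<Longrightarrow> cnt (smult c F) A = cnt F A"
  unfolding cnt_def by (simp add: order_smult)

lemma cnt_parity:
  assumes "F \<noteq> 0" "a < b" "poly F a \<noteq> 0" "poly F b \<noteq> 0"
  shows "(poly F a * poly F b > 0) \<longleftrightarrow> even (cnt F {a<..<b})"
  using assms
proof (induction "cnt F {a<..<b}" arbitrary: F)
  case 0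
  have "\<not> poly F a * poly F b < 0"
  proof
    assume "poly F a * poly F b < 0"
    then obtain x where "a < x" "x < b" "poly F x = 0" using poly_IVT[OF \<open>a<b\<close>] by blast
    then have "cnt F {a<..<b} \<ge> 1" using cnt_root[OF \<open>F\<noteq>0\<close>] by auto
    with 0 show False by simp
  qed
  moreover have "poly F a * poly F b \<noteq> 0" using 0 by simp
  ultimately have "poly F a * poly F b > 0" by linarith
  then show ?case using 0 by simp
next
  case (Suc n)
  have "cnt F {a<..<b} \<noteq> 0" using Suc.hyps(2) by simp
  then obtain r where r: "poly F r = 0" "a < r" "r < b"
  proof -
    assume c0: "cnt F {a<..<b} \<noteq> 0"
    have "\<exists>r\<in>{r. poly F r = 0 \<and> r \<in> {a<..<b}}. Polynomial.order r F \<noteq> 0"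
    proof (rule ccontr)
      assume "\<not> ?thesis"
      then have "cnt F {a<..<b} = 0" unfolding cnt_def by (intro sum.neutral) simp
      with c0 show False by simp
    qed
    then obtain r0 where "poly F r0 = 0" "r0 \<in> {a<..<b}" by blast
    then show ?thesis by (intro that) auto
  qed
  have "[:-r,1:] dvd F" using r(1) poly_eq_0_iff_dvd by blast
  then obtain G where G: "F = [:-r,1:] * G" by (rule dvdE)
  have G0: "G \<noteq> 0" using Suc.prems(1) G by auto
  have "cnt F {a<..<b} = 1 + cnt G {a<..<b}" unfolding G
    by (subst cnt_mult) (use G0 r in \<open>auto simp: cnt_lin\<close>)
  then have n: "n = cnt G {a<..<b}" using Suc.hyps(2) by simp
  have Ga: "poly G a \<noteq> 0" "poly G b \<noteq> 0" using Suc.prems(3,4) G by auto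
  have IH: "(poly G a * poly G b > 0) \<longleftrightarrow> even n"
    using Suc.hyps(1)[OF n G0 \<open>a<b\<close> Ga] n by simp
  have e: "poly F a * poly F b = ((a - r) * (b - r)) * (poly G a * poly G b)"
    unfolding G by (simp add: algebra_simps)
  have neg: "(a - r) * (b - r) < 0" using r by (intro mult_neg_pos) auto
  have "(poly F a * poly F b > 0) \<longleftrightarrow> (poly G a * poly G b < 0)"
    unfolding e using neg by (metis mult_less_0_iff zero_less_mult_iff not_less_iff_gr_or_eq)
  also have "\<dots> \<longleftrightarrow> \<not> (poly G a * poly G b > 0)" using Ga
    by (metis linorder_neqE_linordered_idom mult_eq_0_iff not_less_iff_gr_or_eq)
  also have "\<dots> \<longleftrightarrow> even (Suc n)" using IH by simp
  finally show ?case using Suc.hyps(2) by simp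
qed




lemma alt_roots:
  fixes F :: "real poly"
  assumes "F \<noteq> 0" "finite E" "E \<noteq> {}"
    and alt: "\<And>\<alpha> \<beta>. \<alpha> \<in> E \<Longrightarrow> \<beta> \<in> E \<Longrightarrow> \<alpha> < \<beta> \<Longrightarrow> (\<forall>\<gamma>\<in>E. \<not> (\<alpha> < \<gamma> \<and> \<gamma> < \<beta>)) \<Longrightarrow> poly F \<alpha> * poly F \<beta> < 0"
  shows "card E \<le> cnt F {Min E<..<Max E} + 1"
  using assms(2-)
proof (induction "card E" arbitrary: E)
  case 0
  then show ?case by simp
next
  case (Suc n E)
  show ?case
  proof (cases "n = 0")
    case True
    then show ?thesis using Suc.hyps(2) by simp
  next
    case False
    define M where "M = Max E"
    define E' where "E' = E - {M}"
    have ME: "M \<in> E" unfolding M_def using Suc.prems by simp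
    have cE': "card E' = n" unfolding E'_def using Suc.hyps(2) ME Suc.prems by simp
    have fE': "finite E'" unfolding E'_def using Suc.prems by simp
    have nE': "E' \<noteq> {}" using cE' False by auto
    define M' where "M' = Max E'"
    have M'E': "M' \<in> E'" unfolding M'_def using fE' nE' by simp
    have le: "\<And>x. x \<in> E \<Longrightarrow> x \<le> M" unfolding M_def using Suc.prems by simp
    have le': "\<And>x. x \<in> E' \<Longrightarrow> x \<le> M'" unfolding M'_def using fE' nE' by simp
    have M'M: "M' < M" using M'E' le[of M'] unfolding E'_def by force
    have altE': "poly F \<alpha> * poly F \<beta> < 0"
      if "\<alpha> \<in> E'" "\<beta> \<in> E'" "\<alpha> < \<beta>" "\<forall>\<gamma>\<in>E'. \<not> (\<alpha> < \<gamma> \<and> \<gamma> < \<beta>)" for \<alpha> \<beta>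
    proof (rule Suc.prems(3))
      show "\<alpha> \<in> E" "\<beta> \<in> E" using that unfolding E'_def by auto
      show "\<alpha> < \<beta>" by fact
      show "\<forall>\<gamma>\<in>E. \<not> (\<alpha> < \<gamma> \<and> \<gamma> < \<beta>)"
      proof
        fix \<gamma> assume "\<gamma> \<in> E"
        show "\<not> (\<alpha> < \<gamma> \<and> \<gamma> < \<beta>)"
        proof (cases "\<gamma> = M")
          case True
          then show ?thesis using le'[OF that(2)] M'M by auto
        next
          case False
          then show ?thesis using that(4) \<open>\<gamma> \<in> E\<close> unfolding E'_def by auto
        qed
      qed
    qed
    have IH: "card E' \<le> cnt F {Min E'<..<Max E'} + 1"
      using Suc.hyps(1)[OF cE'[symmetric] fE' nE' altE'] by blast
    have "poly F M' * poly F M < 0"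
    proof (rule Suc.prems(3))
      show "M' \<in> E" "M \<in> E" using M'E' ME unfolding E'_def by auto
      show "M' < M" by fact
      show "\<forall>\<gamma>\<in>E. \<not> (M' < \<gamma> \<and> \<gamma> < M)"
      proof
        fix \<gamma> assume "\<gamma> \<in> E"
        show "\<not> (M' < \<gamma> \<and> \<gamma> < M)"
        proof (cases "\<gamma> = M")
          case True then show ?thesis by simp
        next
          case False
          then have "\<gamma> \<in> E'" using \<open>\<gamma> \<in> E\<close> unfolding E'_def by auto
          then show ?thesis using le' by force
        qed
      qed
    qed
    then obtain \<rho> where \<rho>: "M' < \<rho>" "\<rho> < M" "poly F \<rho> = 0" using poly_IVT[OF M'M] by blast
    have minE: "Min E' = Min E"
    proof -
      have "Min E \<in> E" using Suc.prems by simp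
      have "Min E \<le> M'" using Suc.prems M'E' unfolding E'_def by simp
      then have "Min E \<in> E'" using \<open>Min E \<in> E\<close> M'M unfolding E'_def by auto
      then have 1: "Min E' \<le> Min E" using fE' by simp
      have "Min E' \<in> E" using Min_in[OF fE' nE'] unfolding E'_def by simp
      then have "Min E \<le> Min E'" using Suc.prems by simp
      then show ?thesis using 1 by simp
    qed
    have mM': "Min E \<le> M'" using minE le'[OF Min_in[OF fE' nE']] by simp
    have disj: "{Min E<..<M'} \<inter> {M'<..<M} = {}" by auto
    have sub: "{Min E<..<M'} \<union> {M'<..<M} \<subseteq> {Min E<..<Max E}" unfolding M_def[symmetric] using M'M mM' by auto
    have "cnt F {M'<..<M} \<ge> 1" by (rule cnt_root[OF assms(1) \<rho>(3)]) (use \<rho> in auto)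
    then have "cnt F {Min E<..<M'} + 1 \<le> cnt F ({Min E<..<M'} \<union> {M'<..<M})"
      using cnt_union[OF assms(1) disj] by simp
    also have "\<dots> \<le> cnt F {Min E<..<Max E}" by (rule cnt_mono[OF assms(1) sub])
    finally have "cnt F {Min E<..<M'} + 1 \<le> cnt F {Min E<..<Max E}" .
    moreover have "n \<le> cnt F {Min E<..<M'} + 1" using IH cE' minE unfolding M'_def by simp
    ultimately show ?thesis using Suc.hyps(2) by simp
  qed
qed

definition PP :: "(nat \<Rightarrow> real) \<Rightarrow> nat set \<Rightarrow> real poly" where
  "PP a S = (\<Prod>q\<in>S. [:- a q, 1:])"

definition SQ :: "(nat \<Rightarrow> real) \<Rightarrow> (nat \<Rightarrow> real) \<Rightarrow> nat set \<Rightarrow> real poly" where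
  "SQ a w S = PP a S - (\<Sum>q\<in>S. smult (w q) (PP a (S - {q})))"

lemma PP_nz[simp]: "PP a S \<noteq> 0"
  unfolding PP_def by (cases "finite S") (auto simp: prod_zero_iff)

lemma degree_PP: "finite S \<Longrightarrow> degree (PP a S) = card S"
  unfolding PP_def by (subst degree_prod_sum_eq) auto

lemma lc_PP: "lead_coeff (PP a S) = 1"
  unfolding PP_def by (simp add: lead_coeff_prod)

lemma poly_PP: "poly (PP a S) x = (\<Prod>q\<in>S. x - a q)"
  unfolding PP_def by (simp add: poly_prod)

lemma PP_remove: "finite S \<Longrightarrow> q \<in> S \<Longrightarrow> PP a S = [:- a q, 1:] * PP a (S - {q})"
  unfolding PP_def by (simp add: prod.remove)

lemma SQ_degree_lc:
  assumes "finite S"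
  shows "degree (SQ a w S) = card S \<and> lead_coeff (SQ a w S) = 1"
proof (cases "S = {}")
  case True
  then show ?thesis unfolding SQ_def PP_def by simp
next
  case False
  define T where "T = (\<Sum>q\<in>S. smult (w q) (PP a (S - {q})))"
  have "degree T \<le> card S - 1" unfolding T_def
  proof (rule degree_sum_le[OF assms])
    fix q assume "q \<in> S"
    have "degree (smult (w q) (PP a (S - {q}))) \<le> degree (PP a (S - {q}))" by (rule degree_smult_le)
    also have "\<dots> = card S - 1" using assms \<open>q \<in> S\<close> by (simp add: degree_PP)
    finally show "degree (smult (w q) (PP a (S - {q}))) \<le> card S - 1" .
  qed
  moreover have "card S > 0" using False assms by (simp add: card_gt_0_iff)
  ultimately have dT: "degree (- T) < degree (PP a S)" using degree_PP[OF assms] by simp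
  have "SQ a w S = PP a S + (- T)" unfolding SQ_def T_def by simp
  moreover have "degree (PP a S + (- T)) = degree (PP a S)" by (rule degree_add_eq_left[OF dT])
  moreover have "coeff (- T) (degree (PP a S)) = 0" using dT by (simp add: coeff_eq_0)
  ultimately show ?thesis using degree_PP[OF assms] lc_PP[of a S] by simp
qed

lemma SQ_nz: "finite S \<Longrightarrow> SQ a w S \<noteq> 0"
  using SQ_degree_lc[of S a w] by auto

lemma poly_SQ_at:
  assumes "finite S" "q \<in> S"
  shows "poly (SQ a w S) (a q) = - w q * (\<Prod>r\<in>S - {q}. a q - a r)"
proof -
  have "poly (PP a S) (a q) = 0" unfolding poly_PP using assms by (auto intro: prod_zero)
  moreover have "(\<Sum>r\<in>S. w r * poly (PP a (S - {r})) (a q)) = w q * poly (PP a (S - {q})) (a q)"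
  proof (rule sum.remove[OF assms, THEN trans])
    have "(\<Sum>r\<in>S - {q}. w r * poly (PP a (S - {r})) (a q)) = 0"
    proof (rule sum.neutral, rule ballI)
      fix r assume "r \<in> S - {q}"
      then have "q \<in> S - {r}" using assms by auto
      then have "poly (PP a (S - {r})) (a q) = 0" unfolding poly_PP using assms
        by (intro prod_zero) auto
      then show "w r * poly (PP a (S - {r})) (a q) = 0" by simp
    qed
    then show "w q * poly (PP a (S - {q})) (a q) + (\<Sum>r\<in>S - {q}. w r * poly (PP a (S - {r})) (a q)) =
      w q * poly (PP a (S - {q})) (a q)" by simp
  qed
  ultimately show ?thesis unfolding SQ_def by (simp add: poly_sum poly_PP)
qed

lemma cnt_PP: "finite S \<Longrightarrow> cnt (PP a S) A = card {q\<in>S. a q \<in> A}"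
proof (induction S rule: finite_induct)
  case empty
  then show ?case unfolding PP_def cnt_def by simp
next
  case (insert q S)
  have e: "PP a (insert q S) = [:- a q, 1:] * PP a S" unfolding PP_def using insert by simp
  have "cnt (PP a (insert q S)) A = cnt [:- a q, 1:] A + cnt (PP a S) A"
    unfolding e by (rule cnt_mult) auto
  then have "cnt (PP a (insert q S)) A = (if a q \<in> A then 1 else 0) + cnt (PP a S) A"
    by (simp add: cnt_lin)
  moreover have "{r \<in> insert q S. a r \<in> A} = (if a q \<in> A then insert q {r \<in> S. a r \<in> A} else {r \<in> S. a r \<in> A})"
    by auto
  ultimately show ?case using insert by auto
qed


definition downset :: "real set \<Rightarrow> bool" where
  "downset A \<longleftrightarrow> (\<forall>y z. z \<in> A \<longrightarrow> y \<le> z \<longrightarrow> y \<in> A)"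

lemma downset_lt: "downset {..<x}" and downset_le: "downset {..x}"
  unfolding downset_def by auto

lemma prod_consec_neg:
  assumes "finite S" "inj_on a S" "q\<in>S" "p\<in>S" "a q < a p" "\<forall>r\<in>S. \<not>(a q < a r \<and> a r < a p)"
  shows "(\<Prod>r\<in>S-{q}. a q - a r) * (\<Prod>r\<in>S-{p}. a p - a r) < (0::real)"
proof -
  have pq: "p \<noteq> q" using assms(5) by auto
  have 1: "(\<Prod>r\<in>S-{q}. a q - a r) = (a q - a p) * (\<Prod>r\<in>S-{q}-{p}. a q - a r)"
    by (rule prod.remove) (use assms pq in auto)
  have 2: "(\<Prod>r\<in>S-{p}. a p - a r) = (a p - a q) * (\<Prod>r\<in>S-{q}-{p}. a p - a r)"
  proof -
    have "(\<Prod>r\<in>S-{p}. a p - a r) = (a p - a q) * (\<Prod>r\<in>S-{p}-{q}. a p - a r)"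
      by (rule prod.remove) (use assms pq in auto)
    moreover have "S-{p}-{q} = S-{q}-{p}" by auto
    ultimately show ?thesis by simp
  qed
  have 3: "(\<Prod>r\<in>S-{q}-{p}. a q - a r) * (\<Prod>r\<in>S-{q}-{p}. a p - a r) = (\<Prod>r\<in>S-{q}-{p}. (a q - a r) * (a p - a r))"
    by (rule prod.distrib[symmetric])
  have 4: "(\<Prod>r\<in>S-{q}-{p}. (a q - a r) * (a p - a r)) > 0"
  proof (rule prod_pos)
    fix r assume r: "r \<in> S-{q}-{p}"
    then have "a r \<noteq> a q" "a r \<noteq> a p" using assms(2,3,4) by (auto dest: inj_onD)
    moreover have "\<not>(a q < a r \<and> a r < a p)" using assms(6) r by auto
    ultimately have "a r < a q \<or> a r > a p" by auto
    then show "(a q - a r) * (a p - a r) > 0"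
      using assms(5) by (auto intro: mult_pos_pos mult_neg_neg)
  qed
  have 5: "(a q - a p) * (a p - a q) < 0" using assms(5) by (intro mult_neg_pos) auto
  have "(\<Prod>r\<in>S-{q}. a q - a r) * (\<Prod>r\<in>S-{p}. a p - a r) =
     ((a q - a p) * (a p - a q)) * ((\<Prod>r\<in>S-{q}-{p}. a q - a r) * (\<Prod>r\<in>S-{q}-{p}. a p - a r))"
    unfolding 1 2 by (simp add: ac_simps)
  also have "\<dots> < 0" unfolding 3 using 5 4 by (rule mult_neg_pos)
  finally show ?thesis .
qed

lemma SQ_alt:
  assumes fin: "finite S" and inj: "inj_on a S" and sgn: "(\<forall>q\<in>S. w q > 0) \<or> (\<forall>q\<in>S. w q < 0)"
    and T: "T \<subseteq> S" "T \<noteq> {}"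
    and sep: "\<And>r q p. r \<in> S - T \<Longrightarrow> q \<in> T \<Longrightarrow> p \<in> T \<Longrightarrow> \<not> (a q < a r \<and> a r < a p)"
  shows "card T \<le> cnt (SQ a w S) {Min (a`T)<..<Max (a`T)} + 1"
proof -
  have finT: "finite T" using fin T(1) by (rule finite_subset[rotated])
  have cardE: "card (a`T) = card T" using inj T(1) by (intro card_image) (rule inj_on_subset)
  have "card (a`T) \<le> cnt (SQ a w S) {Min (a`T)<..<Max (a`T)} + 1"
  proof (rule alt_roots)
    show "SQ a w S \<noteq> 0" by (rule SQ_nz[OF fin])
    show "finite (a`T)" using finT by simp
    show "a`T \<noteq> {}" using T by simp
    fix \<alpha> \<beta> assume "\<alpha> \<in> a`T" "\<beta> \<in> a`T" "\<alpha> < \<beta>" and cons: "\<forall>\<gamma>\<in>a`T. \<not> (\<alpha> < \<gamma> \<and> \<gamma> < \<beta>)"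
    then obtain q p where qp: "q \<in> T" "p \<in> T" "\<alpha> = a q" "\<beta> = a p" by auto
    have qS: "q \<in> S" "p \<in> S" using qp T by auto
    have consS: "\<forall>r\<in>S. \<not>(a q < a r \<and> a r < a p)"
    proof
      fix r assume "r \<in> S"
      show "\<not>(a q < a r \<and> a r < a p)"
      proof (cases "r \<in> T")
        case True then show ?thesis using cons qp by auto
      next
        case False then show ?thesis using sep[of r q p] \<open>r \<in> S\<close> qp by auto
      qed
    qed
    have P: "(\<Prod>r\<in>S-{q}. a q - a r) * (\<Prod>r\<in>S-{p}. a p - a r) < 0"
      by (rule prod_consec_neg[OF fin inj]) (use qp T \<open>\<alpha> < \<beta>\<close> consS in auto)
    have W: "w q * w p > 0" using sgn qp T by (auto intro: mult_pos_pos mult_neg_neg)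
    have "poly (SQ a w S) \<alpha> * poly (SQ a w S) \<beta> =
        (w q * w p) * ((\<Prod>r\<in>S-{q}. a q - a r) * (\<Prod>r\<in>S-{p}. a p - a r))"
      unfolding qp(3,4) poly_SQ_at[OF fin qS(1)] poly_SQ_at[OF fin qS(2)] by (simp add: algebra_simps)
    also have "\<dots> < 0" using W P by (rule mult_pos_neg)
    finally show "poly (SQ a w S) \<alpha> * poly (SQ a w S) \<beta> < 0" .
  qed
  then show ?thesis using cardE by simp
qed

lemma prod_neg_sign:
  assumes "finite T" "\<forall>r\<in>T. f r < (0::real)"
  shows "(-1)^card T * prod f T > 0"
proof -
  have "(-1)^card T * prod f T = (\<Prod>r\<in>T. - f r)"
    by (simp add: prod.distrib[symmetric] prod_constant[symmetric] del: prod_constant)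
  also have "\<dots> > 0" using assms by (intro prod_pos) auto
  finally show ?thesis .
qed

lemma poly_minf:
  fixes F :: "real poly"
  assumes "lead_coeff F > 0"
  shows "\<exists>N. \<forall>y\<le>N. (-1)^degree F * poly F y > 0"
proof -
  define G where "G = smult ((-1)^degree F) (pcompose F [:0,-1:])"
  have "lead_coeff (pcompose F [:0,-1:]) = lead_coeff F * (-1)^degree F"
    using lead_coeff_comp[of "[:0,-1:]" F] by simp
  then have "lead_coeff G = lead_coeff F * ((-1)^degree F * (-1)^degree F)"
    unfolding G_def by (simp add: ac_simps)
  also have "(-1)^degree F * (-1)^degree F = (1::real)" by (simp add: power_mult_distrib[symmetric])
  finally have lcG: "lead_coeff G = lead_coeff F" by simp
  obtain N where N: "\<forall>x\<ge>N. poly G x \<ge> lead_coeff G" using poly_pinfty_gt_lc[of G] lcG assms by auto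
  show ?thesis
  proof (rule exI[of _ "-N"], intro allI impI)
    fix y assume "y \<le> -N"
    then have "poly G (-y) \<ge> lead_coeff F" using N lcG by auto
    moreover have "poly G (-y) = (-1)^degree F * poly F y" unfolding G_def by (simp add: poly_pcompose)
    ultimately show "(-1)^degree F * poly F y > 0" using assms by simp
  qed
qed


lemma gen_common:
  assumes fin: "finite S" and inj: "inj_on a S" and A: "downset A"
  defines "L \<equiv> {q\<in>S. a q \<in> A}"
  shows "\<And>r q p. r \<in> S - L \<Longrightarrow> q \<in> L \<Longrightarrow> p \<in> L \<Longrightarrow> \<not> (a q < a r \<and> a r < a p)"
    and "\<And>r q p. r \<in> S - (S - L) \<Longrightarrow> q \<in> S - L \<Longrightarrow> p \<in> S - L \<Longrightarrow> \<not> (a q < a r \<and> a r < a p)"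
    and "L \<noteq> {} \<Longrightarrow> {Min (a`L)<..<Max (a`L)} \<subseteq> A"
    and "S - L \<noteq> {} \<Longrightarrow> {Min (a`(S-L))<..} \<inter> A = {}"
proof -
  show "\<not> (a q < a r \<and> a r < a p)" if "r \<in> S - L" "q \<in> L" "p \<in> L" for r q p
    using that A unfolding L_def downset_def by (auto simp: less_le)
  show "\<not> (a q < a r \<and> a r < a p)" if "r \<in> S - (S - L)" "q \<in> S - L" "p \<in> S - L" for r q p
    using that A unfolding L_def downset_def by (auto simp: less_le)
  have finL: "finite L" unfolding L_def using fin by simp
  show "{Min (a`L)<..<Max (a`L)} \<subseteq> A" if "L \<noteq> {}"
  proof
    fix y assume "y \<in> {Min (a`L)<..<Max (a`L)}"
    moreover have "Max (a`L) \<in> a`L" using finL that by (intro Max_in) auto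
    then have "Max (a`L) \<in> A" unfolding L_def by auto
    ultimately show "y \<in> A" using A unfolding downset_def by auto
  qed
  show "{Min (a`(S-L))<..} \<inter> A = {}" if "S - L \<noteq> {}"
  proof -
    have "Min (a`(S-L)) \<in> a`(S-L)" using Min_in[of "a`(S-L)"] fin that by auto
    then have "Min (a`(S-L)) \<notin> A" unfolding L_def by auto
    then show ?thesis using A unfolding downset_def by auto
  qed
qed

lemma gen_pos:
  assumes fin: "finite S" and inj: "inj_on a S" and w: "\<forall>q\<in>S. w q > 0" and A: "downset A"
  shows "cnt (SQ a w S) A \<le> card {q\<in>S. a q \<in> A} \<and> card {q\<in>S. a q \<in> A} \<le> cnt (SQ a w S) A + 1"
proof -
  define L where "L = {q\<in>S. a q \<in> A}"
  define U where "U = S - L"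
  note gc = gen_common[OF fin inj A, folded L_def, folded U_def]
  have LS: "L \<subseteq> S" and US: "U \<subseteq> S" unfolding L_def U_def by auto
  have finL: "finite L" and finU: "finite U" using LS US fin by (auto intro: finite_subset)
  have SLU: "card S = card L + card U" unfolding U_def using LS fin
    by (metis card_Diff_subset finL card_mono le_add_diff_inverse)
  have sgn: "(\<forall>q\<in>S. w q > 0) \<or> (\<forall>q\<in>S. w q < 0)" using w by simp
  have nz: "SQ a w S \<noteq> 0" by (rule SQ_nz[OF fin])
  have dl: "degree (SQ a w S) = card S \<and> lead_coeff (SQ a w S) = 1" by (rule SQ_degree_lc[OF fin])
  then have deg: "degree (SQ a w S) = card S" and lc: "lead_coeff (SQ a w S) = 1" by blast+
  have part1: "card L \<le> cnt (SQ a w S) A + 1"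
  proof (cases "L = {}")
    case True then show ?thesis by simp
  next
    case False
    have "card L \<le> cnt (SQ a w S) {Min (a`L)<..<Max (a`L)} + 1"
      by (rule SQ_alt[OF fin inj sgn LS False]) (use gc(1) in \<open>auto simp: U_def\<close>)
    also have "\<dots> \<le> cnt (SQ a w S) A + 1" using cnt_mono[OF nz gc(3)[OF False]] by simp
    finally show ?thesis .
  qed
  have part2: "cnt (SQ a w S) A \<le> card L"
  proof (cases "U = {}")
    case True
    then show ?thesis using cnt_le_degree[OF nz, of A] deg SLU by simp
  next
    case False
    have fin_aU: "finite (a`U)" "a`U \<noteq> {}" using finU False by auto
    obtain qm where qm: "qm \<in> U" "a qm = Max (a`U)" using Max_in[OF fin_aU] by auto
    have c1: "card U \<le> cnt (SQ a w S) {Min (a`U)<..<Max (a`U)} + 1"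
      by (rule SQ_alt[OF fin inj sgn US False]) (use gc(2) in \<open>auto simp: U_def\<close>)
    have "\<forall>r\<in>S-{qm}. a qm - a r > 0"
    proof
      fix r assume r: "r \<in> S - {qm}"
      have "qm \<in> S" using qm US by auto
      have "a r \<noteq> a qm"
      proof
        assume "a r = a qm"
        then have "r = qm" using inj r \<open>qm \<in> S\<close> by (auto dest: inj_onD)
        with r show False by simp
      qed
      moreover have "a r \<le> a qm"
      proof (cases "r \<in> U")
        case True then show ?thesis using qm fin_aU by simp
      next
        case False
        then have "a r \<in> A" "a qm \<notin> A" using r qm unfolding U_def L_def by auto
        then show ?thesis using A unfolding downset_def by (meson linear)
      qed
      ultimately show "a qm - a r > 0" by simp
    qed
    then have "(\<Prod>r\<in>S-{qm}. a qm - a r) > 0" by (intro prod_pos) auto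
    moreover have "w qm > 0" using w qm US by auto
    ultimately have neg: "poly (SQ a w S) (a qm) < 0"
      using poly_SQ_at[OF fin, of qm a w] qm US by (auto intro: mult_pos_pos)
    obtain N where N: "\<forall>x\<ge>N. poly (SQ a w S) x \<ge> 1" using poly_pinfty_gt_lc[of "SQ a w S"] lc by auto
    define x where "x = max N (a qm + 1)"
    have "poly (SQ a w S) x \<ge> 1" using N unfolding x_def by simp
    then have "poly (SQ a w S) (a qm) * poly (SQ a w S) x < 0" using neg by (simp add: mult_neg_pos)
    then obtain \<rho> where \<rho>: "a qm < \<rho>" "poly (SQ a w S) \<rho> = 0"
      using poly_IVT[of "a qm" x] unfolding x_def by force
    have c2: "cnt (SQ a w S) {Max (a`U)<..} \<ge> 1"
      by (rule cnt_root[OF nz \<rho>(2)]) (use \<rho> qm in auto)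
    have disj: "{Min (a`U)<..<Max (a`U)} \<inter> {Max (a`U)<..} = {}" by auto
    have "card U \<le> cnt (SQ a w S) ({Min (a`U)<..<Max (a`U)} \<union> {Max (a`U)<..})"
      using c1 c2 cnt_union[OF nz disj] by simp
    also have "\<dots> \<le> cnt (SQ a w S) (- A)"
    proof (rule cnt_mono[OF nz])
      have "Min (a`U) \<le> Max (a`U)" using fin_aU by simp
      then have s: "{Min (a`U)<..<Max (a`U)} \<union> {Max (a`U)<..} \<subseteq> {Min (a`U)<..}" by auto
      have e: "{Min (a`U)<..} \<inter> A = {}" using gc(4) False unfolding U_def by simp
      show "{Min (a`U)<..<Max (a`U)} \<union> {Max (a`U)<..} \<subseteq> - A" using s e by blast
    qed
    finally have c3: "card U \<le> cnt (SQ a w S) (- A)" .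
    have "cnt (SQ a w S) A + cnt (SQ a w S) (- A) = cnt (SQ a w S) (A \<union> - A)"
      by (rule cnt_union[OF nz, symmetric]) auto
    also have "\<dots> \<le> card S" using cnt_le_degree[OF nz] deg by simp
    finally show ?thesis using c3 SLU by simp
  qed
  show ?thesis using part1 part2 unfolding L_def by simp
qed

lemma gen_neg:
  assumes fin: "finite S" and inj: "inj_on a S" and w: "\<forall>q\<in>S. w q < 0" and A: "downset A"
  shows "card {q\<in>S. a q \<in> A} \<le> cnt (SQ a w S) A \<and> cnt (SQ a w S) A \<le> card {q\<in>S. a q \<in> A} + 1"
proof -
  define L where "L = {q\<in>S. a q \<in> A}"
  define U where "U = S - L"
  note gc = gen_common[OF fin inj A, folded L_def, folded U_def]
  have LS: "L \<subseteq> S" and US: "U \<subseteq> S" unfolding L_def U_def by auto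
  have finL: "finite L" and finU: "finite U" using LS US fin by (auto intro: finite_subset)
  have SLU: "card S = card L + card U" unfolding U_def using LS fin
    by (metis card_Diff_subset finL card_mono le_add_diff_inverse)
  have sgn: "(\<forall>q\<in>S. w q > 0) \<or> (\<forall>q\<in>S. w q < 0)" using w by simp
  have nz: "SQ a w S \<noteq> 0" by (rule SQ_nz[OF fin])
  have dl: "degree (SQ a w S) = card S \<and> lead_coeff (SQ a w S) = 1" by (rule SQ_degree_lc[OF fin])
  then have deg: "degree (SQ a w S) = card S" and lc: "lead_coeff (SQ a w S) = 1" by blast+
  have part2: "cnt (SQ a w S) A \<le> card L + 1"
  proof (cases "U = {}")
    case True
    then show ?thesis using cnt_le_degree[OF nz, of A] deg SLU by simp
  next
    case False
    have c1: "card U \<le> cnt (SQ a w S) {Min (a`U)<..<Max (a`U)} + 1"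
      by (rule SQ_alt[OF fin inj sgn US False]) (use gc(2) in \<open>auto simp: U_def\<close>)
    also have "\<dots> \<le> cnt (SQ a w S) (- A) + 1"
    proof -
      have "{Min (a`U)<..} \<inter> A = {}" using gc(4) False unfolding U_def by simp
      then have "{Min (a`U)<..<Max (a`U)} \<subseteq> - A" by auto
      then show ?thesis using cnt_mono[OF nz] by simp
    qed
    finally have c3: "card U \<le> cnt (SQ a w S) (- A) + 1" .
    have "cnt (SQ a w S) A + cnt (SQ a w S) (- A) = cnt (SQ a w S) (A \<union> - A)"
      by (rule cnt_union[OF nz, symmetric]) auto
    also have "\<dots> \<le> card S" using cnt_le_degree[OF nz] deg by simp
    finally show ?thesis using c3 SLU by simp
  qed
  have part1: "card L \<le> cnt (SQ a w S) A"
  proof (cases "L = {}")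
    case True then show ?thesis by simp
  next
    case False
    have fin_aL: "finite (a`L)" "a`L \<noteq> {}" using finL False by auto
    obtain qm where qm: "qm \<in> L" "a qm = Min (a`L)" using Min_in[OF fin_aL] by auto
    have c1: "card L \<le> cnt (SQ a w S) {Min (a`L)<..<Max (a`L)} + 1"
      by (rule SQ_alt[OF fin inj sgn LS False]) (use gc(1) in \<open>auto simp: U_def\<close>)
    have allneg: "\<forall>r\<in>S-{qm}. a qm - a r < 0"
    proof
      fix r assume r: "r \<in> S - {qm}"
      have "qm \<in> S" using qm LS by auto
      have "a r \<noteq> a qm"
      proof
        assume "a r = a qm"
        then have "r = qm" using inj r \<open>qm \<in> S\<close> by (auto dest: inj_onD)
        with r show False by simp
      qed
      moreover have "a qm \<le> a r"
      proof (cases "r \<in> L")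
        case True then show ?thesis using qm fin_aL by simp
      next
        case False
        then have "a r \<notin> A" "a qm \<in> A" using r qm unfolding L_def by auto
        then show ?thesis using A unfolding downset_def by (meson linear)
      qed
      ultimately show "a qm - a r < 0" by simp
    qed
    have cS: "card (S - {qm}) = card S - 1" using qm LS fin by (subst card_Diff_singleton) auto
    have S1: "card S \<ge> 1" using qm LS fin by (metis One_nat_def Suc_leI card_gt_0_iff empty_iff subsetD)
    have s1: "(-1)^(card S - 1) * (\<Prod>r\<in>S-{qm}. a qm - a r) > 0"
      using prod_neg_sign[of "S - {qm}" "\<lambda>r. a qm - a r"] allneg fin cS by simp
    have wq: "- w qm > 0" using w qm LS by auto
    have v1: "(-1)^(card S - 1) * poly (SQ a w S) (a qm) > 0"
    proof -
      have "(-1)^(card S - 1) * poly (SQ a w S) (a qm) = (- w qm) * ((-1)^(card S - 1) * (\<Prod>r\<in>S-{qm}. a qm - a r))"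
        using poly_SQ_at[OF fin, of qm a w] qm LS by (auto simp: algebra_simps)
      also have "\<dots> > 0" using wq s1 by (rule mult_pos_pos)
      finally show ?thesis .
    qed
    obtain N where N: "\<forall>y\<le>N. (-1)^card S * poly (SQ a w S) y > 0"
      using poly_minf[of "SQ a w S"] lc deg by auto
    define y where "y = min N (a qm - 1)"
    have v2: "(-1)^card S * poly (SQ a w S) y > 0" using N unfolding y_def by simp
    have "((-1)^card S * poly (SQ a w S) y) * ((-1)^(card S - 1) * poly (SQ a w S) (a qm)) > 0"
      using v1 v2 by (rule mult_pos_pos[rotated])
    moreover have "(-1)^card S * (-1)^(card S - 1) = (-1::real)"
    proof -
      have "card S = Suc (card S - 1)" using S1 by simp
      then have "(-1::real)^card S = - ((-1)^(card S - 1))" by (metis power_Suc mult_minus1)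
      then show ?thesis by (simp add: power_mult_distrib[symmetric])
    qed
    ultimately have "- (poly (SQ a w S) y * poly (SQ a w S) (a qm)) > 0"
      by (metis (no_types, lifting) mult.assoc mult.left_commute mult_minus1)
    then have "poly (SQ a w S) y * poly (SQ a w S) (a qm) < 0" by simp
    moreover have "y < a qm" unfolding y_def by simp
    ultimately obtain \<rho> where \<rho>: "y < \<rho>" "\<rho> < a qm" "poly (SQ a w S) \<rho> = 0"
      using poly_IVT by blast
    have c2: "cnt (SQ a w S) {..<Min (a`L)} \<ge> 1"
      by (rule cnt_root[OF nz \<rho>(3)]) (use \<rho> qm in auto)
    have disj: "{..<Min (a`L)} \<inter> {Min (a`L)<..<Max (a`L)} = {}" by auto
    have "card L \<le> cnt (SQ a w S) ({..<Min (a`L)} \<union> {Min (a`L)<..<Max (a`L)})"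
      using c1 c2 cnt_union[OF nz disj] by simp
    also have "\<dots> \<le> cnt (SQ a w S) A"
    proof (rule cnt_mono[OF nz])
      have "Max (a`L) \<in> A" using Max_in[OF fin_aL] unfolding L_def by auto
      then have "{..<Max (a`L)} \<subseteq> A" using A unfolding downset_def by auto
      moreover have "Min (a`L) \<le> Max (a`L)" using fin_aL by simp
      ultimately show "{..<Min (a`L)} \<union> {Min (a`L)<..<Max (a`L)} \<subseteq> A" by auto
    qed
    finally show ?thesis .
  qed
  show ?thesis using part1 part2 unfolding L_def by simp
qed


definition lo :: "real poly \<Rightarrow> real poly \<Rightarrow> bool" where
  "lo F G \<longleftrightarrow> (\<forall>A. downset A \<longrightarrow> cnt F A \<le> cnt G A \<and> cnt G A \<le> cnt F A + 1)"

lemma lo_mult: "lo F G \<Longrightarrow> H \<noteq> 0 \<Longrightarrow> F \<noteq> 0 \<Longrightarrow> G \<noteq> 0 \<Longrightarrow> lo (H*F) (H*G)"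
  unfolding lo_def by (simp add: cnt_mult)

lemma sum_remove_lin:
  assumes "finite S" "q \<in> S"
  shows "(\<Sum>r\<in>S - {q}. smult (w r) (PP a (S - {r}))) = [:- a q, 1:] * (\<Sum>r\<in>S - {q}. smult (w r) (PP a (S - {q} - {r})))"
proof -
  have "(\<Sum>r\<in>S - {q}. smult (w r) (PP a (S - {r}))) = (\<Sum>r\<in>S - {q}. [:- a q, 1:] * smult (w r) (PP a (S - {q} - {r})))"
  proof (rule sum.cong[OF refl])
    fix r assume r: "r \<in> S - {q}"
    have "PP a (S - {r}) = [:- a q, 1:] * PP a (S - {r} - {q})"
      by (rule PP_remove) (use assms r in auto)
    moreover have "S - {r} - {q} = S - {q} - {r}" by auto
    ultimately show "smult (w r) (PP a (S - {r})) = [:- a q, 1:] * smult (w r) (PP a (S - {q} - {r}))"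
      by (simp add: mult_smult_right)
  qed
  also have "\<dots> = [:- a q, 1:] * (\<Sum>r\<in>S - {q}. smult (w r) (PP a (S - {q} - {r})))"
    by (simp add: sum_distrib_left)
  finally show ?thesis .
qed

lemma SQ_remove0:
  assumes "finite S" "q \<in> S" "w q = 0"
  shows "SQ a w S = [:- a q, 1:] * SQ a w (S - {q})"
proof -
  have "(\<Sum>r\<in>S. smult (w r) (PP a (S - {r}))) = smult (w q) (PP a (S - {q})) + (\<Sum>r\<in>S - {q}. smult (w r) (PP a (S - {r})))"
    by (rule sum.remove[OF assms(1,2)])
  also have "\<dots> = [:- a q, 1:] * (\<Sum>r\<in>S - {q}. smult (w r) (PP a (S - {q} - {r})))"
    using assms(3) sum_remove_lin[OF assms(1,2)] by simp
  finally have e: "(\<Sum>r\<in>S. smult (w r) (PP a (S - {r}))) = [:- a q, 1:] * (\<Sum>r\<in>S - {q}. smult (w r) (PP a (S - {q} - {r})))" .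
  show ?thesis unfolding SQ_def e PP_remove[OF assms(1,2), of a] by (simp add: right_diff_distrib)
qed

lemma SQ_merge:
  assumes "finite S" "q \<in> S" "p \<in> S" "p \<noteq> q" "a p = a q"
  shows "SQ a w S = [:- a q, 1:] * SQ a (w(p := w p + w q)) (S - {q})"
proof -
  define w' where "w' = w(p := w p + w q)"
  have pS: "p \<in> S - {q}" using assms by auto
  have fS: "finite (S - {q})" using assms by simp
  have 1: "PP a (S - {q}) = [:- a q, 1:] * PP a (S - {q} - {p})"
    using PP_remove[OF fS pS, of a] assms(5) by simp
  have "(\<Sum>r\<in>S - {q}. smult (w' r) (PP a (S - {q} - {r}))) =
      (\<Sum>r\<in>S - {q}. smult (w r) (PP a (S - {q} - {r})) + (if r = p then smult (w q) (PP a (S - {q} - {p})) else 0))"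
    by (rule sum.cong) (auto simp: w'_def smult_add_left)
  also have "\<dots> = (\<Sum>r\<in>S - {q}. smult (w r) (PP a (S - {q} - {r}))) + smult (w q) (PP a (S - {q} - {p}))"
    using pS fS by (simp add: sum.distrib)
  finally have 2: "(\<Sum>r\<in>S - {q}. smult (w' r) (PP a (S - {q} - {r}))) =
      (\<Sum>r\<in>S - {q}. smult (w r) (PP a (S - {q} - {r}))) + smult (w q) (PP a (S - {q} - {p}))" .
  have "(\<Sum>r\<in>S. smult (w r) (PP a (S - {r}))) = smult (w q) (PP a (S - {q})) + (\<Sum>r\<in>S - {q}. smult (w r) (PP a (S - {r})))"
    by (rule sum.remove[OF assms(1,2)])
  also have "\<dots> = [:- a q, 1:] * (\<Sum>r\<in>S - {q}. smult (w' r) (PP a (S - {q} - {r})))"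
    unfolding sum_remove_lin[OF assms(1,2)] 2 1 by (simp add: mult_smult_right distrib_left)
  finally have e: "(\<Sum>r\<in>S. smult (w r) (PP a (S - {r}))) = [:- a q, 1:] * (\<Sum>r\<in>S - {q}. smult (w' r) (PP a (S - {q} - {r})))" .
  show ?thesis unfolding SQ_def e PP_remove[OF assms(1,2), of a] w'_def[symmetric] by (simp add: right_diff_distrib)
qed

lemma R1:
  assumes "finite S"
  shows "((\<forall>q\<in>S. w q \<ge> 0) \<longrightarrow> lo (SQ a w S) (PP a S)) \<and> ((\<forall>q\<in>S. w q \<le> 0) \<longrightarrow> lo (PP a S) (SQ a w S))"
  using assms
proof (induction "card S" arbitrary: S w rule: less_induct)
  case less
  note fin = less.prems(1)
  show ?case
  proof (cases "\<exists>q\<in>S. w q = 0")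
    case True
    then obtain q where q: "q \<in> S" "w q = 0" by blast
    have c: "card (S - {q}) < card S" using q fin by (meson card_Diff1_less)
    have f': "finite (S - {q})" using fin by simp
    note IH = less.hyps[OF c f', of w]
    have e1: "SQ a w S = [:- a q, 1:] * SQ a w (S - {q})" by (rule SQ_remove0[of S q w a, OF fin q])
    have e2: "PP a S = [:- a q, 1:] * PP a (S - {q})" by (rule PP_remove[OF fin q(1)])
    have nz: "SQ a w (S - {q}) \<noteq> 0" "PP a (S - {q}) \<noteq> 0" "[:- a q, 1:] \<noteq> 0" using SQ_nz[OF f'] by auto
    show ?thesis
    proof (intro conjI impI)
      assume "\<forall>q\<in>S. w q \<ge> 0"
      then have "lo (SQ a w (S-{q})) (PP a (S-{q}))" using IH by blast
      then show "lo (SQ a w S) (PP a S)" unfolding e1 e2 by (rule lo_mult) (rule nz)+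
    next
      assume "\<forall>q\<in>S. w q \<le> 0"
      then have "lo (PP a (S-{q})) (SQ a w (S-{q}))" using IH by blast
      then show "lo (PP a S) (SQ a w S)" unfolding e1 e2 by (rule lo_mult) (rule nz)+
    qed
  next
    case nz0: False
    show ?thesis
    proof (cases "\<exists>q\<in>S. \<exists>p\<in>S. p \<noteq> q \<and> a p = a q")
      case True
      then obtain q p where qp: "q \<in> S" "p \<in> S" "p \<noteq> q" "a p = a q" by blast
      define w' where "w' = w(p := w p + w q)"
      have c: "card (S - {q}) < card S" using qp fin by (meson card_Diff1_less)
      have f': "finite (S - {q})" using fin by simp
      note IH = less.hyps[OF c f', of w']
      have e1: "SQ a w S = [:- a q, 1:] * SQ a w' (S - {q})" unfolding w'_def by (rule SQ_merge[OF fin qp])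
      have e2: "PP a S = [:- a q, 1:] * PP a (S - {q})" by (rule PP_remove[OF fin qp(1)])
      have nz: "SQ a w' (S - {q}) \<noteq> 0" "PP a (S - {q}) \<noteq> 0" "[:- a q, 1:] \<noteq> 0" using SQ_nz[OF f'] by auto
      have s1: "(\<forall>r\<in>S - {q}. w' r \<ge> 0)" if h: "\<forall>q\<in>S. w q \<ge> 0"
      proof -
        have "w p \<ge> 0" "w q \<ge> 0" using h qp by auto
        then show ?thesis using h unfolding w'_def by auto
      qed
      have s2: "(\<forall>r\<in>S - {q}. w' r \<le> 0)" if h: "\<forall>q\<in>S. w q \<le> 0"
      proof -
        have "w p \<le> 0" "w q \<le> 0" using h qp by auto
        then show ?thesis using h unfolding w'_def by auto
      qed
      show ?thesis
      proof (intro conjI impI)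
        assume "\<forall>q\<in>S. w q \<ge> 0"
        then have "lo (SQ a w' (S-{q})) (PP a (S-{q}))" using IH s1 by blast
        then show "lo (SQ a w S) (PP a S)" unfolding e1 e2 by (rule lo_mult) (rule nz)+
      next
        assume "\<forall>q\<in>S. w q \<le> 0"
        then have "lo (PP a (S-{q})) (SQ a w' (S-{q}))" using IH s2 by blast
        then show "lo (PP a S) (SQ a w S)" unfolding e1 e2 by (rule lo_mult) (rule nz)+
      qed
    next
      case False
      then have inj: "inj_on a S" unfolding inj_on_def by blast
      have w0: "\<forall>q\<in>S. w q \<noteq> 0" using nz0 by blast
      show ?thesis
      proof (intro conjI impI)
        assume "\<forall>q\<in>S. w q \<ge> 0"
        then have "\<forall>q\<in>S. w q > 0" using w0 by force
        then show "lo (SQ a w S) (PP a S)" unfolding lo_def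
          using gen_pos[OF fin inj] cnt_PP[OF fin] inj by simp
      next
        assume "\<forall>q\<in>S. w q \<le> 0"
        then have "\<forall>q\<in>S. w q < 0" using w0 by force
        then show "lo (PP a S) (SQ a w S)" unfolding lo_def
          using gen_neg[OF fin inj] cnt_PP[OF fin] inj by simp
      qed
    qed
  qed
qed


lemma det2:
  fixes A :: "'a::comm_ring_1 mat"
  assumes A: "A \<in> carrier_mat 2 2"
  shows "det A = A$$(0,0)*A$$(1,1) - A$$(0,1)*A$$(1,0)"
proof -
  have "det A = (\<Sum>i<2. A $$ (i,0) * cofactor A i 0)" by (rule laplace_expansion_column[OF A]) simp
  also have "\<dots> = A $$ (0,0) * cofactor A 0 0 + A $$ (1,0) * cofactor A 1 0"
    by (simp add: numeral_2_eq_2)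
  also have "cofactor A 0 0 = A$$(1,1)"
    unfolding cofactor_def using A by (simp add: det_single mat_delete_def)
  also have "cofactor A 1 0 = - A$$(0,1)"
    unfolding cofactor_def using A by (simp add: det_single mat_delete_def)
  finally show ?thesis by (simp add: algebra_simps)
qed

lemma sylvester_det:
  fixes X :: "'a::idom mat"
  assumes X: "X \<in> carrier_mat n k" and Y: "Y \<in> carrier_mat k n"
  shows "det (1\<^sub>m n - X * Y) = det (1\<^sub>m k - Y * X)"
proof -
  define K where "K = four_block_mat (1\<^sub>m n) X Y (1\<^sub>m k)"
  define L1 where "L1 = four_block_mat (1\<^sub>m n) (0\<^sub>m n k) (- Y) (1\<^sub>m k)"
  define L2 where "L2 = four_block_mat (1\<^sub>m n) (- X) (0\<^sub>m k n) (1\<^sub>m k)"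
  have K: "K \<in> carrier_mat (n+k) (n+k)" unfolding K_def using X Y by auto
  have L1: "L1 \<in> carrier_mat (n+k) (n+k)" unfolding L1_def using X Y by auto
  have L2: "L2 \<in> carrier_mat (n+k) (n+k)" unfolding L2_def using X Y by auto
  have XY: "X * Y \<in> carrier_mat n n" "Y * X \<in> carrier_mat k k" using X Y by auto
  have "L1 * K = four_block_mat (1\<^sub>m n * 1\<^sub>m n + 0\<^sub>m n k * Y) (1\<^sub>m n * X + 0\<^sub>m n k * 1\<^sub>m k)
      (- Y * 1\<^sub>m n + 1\<^sub>m k * Y) (- Y * X + 1\<^sub>m k * 1\<^sub>m k)"
    unfolding L1_def K_def by (rule mult_four_block_mat) (use X Y in auto)
  also have "\<dots> = four_block_mat (1\<^sub>m n) X (0\<^sub>m k n) (1\<^sub>m k - Y * X)"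
  proof -
    have "1\<^sub>m n * 1\<^sub>m n + 0\<^sub>m n k * Y = 1\<^sub>m n" using Y by simp
    moreover have "1\<^sub>m n * X + 0\<^sub>m n k * 1\<^sub>m k = X" using X by simp
    moreover have "- Y * 1\<^sub>m n + 1\<^sub>m k * Y = 0\<^sub>m k n"
      by (rule eq_matI) (use Y in auto)
    moreover have "- Y * X + 1\<^sub>m k * 1\<^sub>m k = 1\<^sub>m k - Y * X"
      by (rule eq_matI) (use X Y in \<open>auto simp: uminus_mult_left_mat\<close>)
    ultimately show ?thesis by simp
  qed
  finally have e1: "L1 * K = four_block_mat (1\<^sub>m n) X (0\<^sub>m k n) (1\<^sub>m k - Y * X)" .
  have "L2 * K = four_block_mat (1\<^sub>m n * 1\<^sub>m n + - X * Y) (1\<^sub>m n * X + - X * 1\<^sub>m k)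
      (0\<^sub>m k n * 1\<^sub>m n + 1\<^sub>m k * Y) (0\<^sub>m k n * X + 1\<^sub>m k * 1\<^sub>m k)"
    unfolding L2_def K_def by (rule mult_four_block_mat) (use X Y in auto)
  also have "\<dots> = four_block_mat (1\<^sub>m n - X * Y) (0\<^sub>m n k) Y (1\<^sub>m k)"
  proof -
    have "1\<^sub>m n * 1\<^sub>m n + - X * Y = 1\<^sub>m n - X * Y"
      by (rule eq_matI) (use X Y in \<open>auto simp: uminus_mult_left_mat\<close>)
    moreover have "1\<^sub>m n * X + - X * 1\<^sub>m k = 0\<^sub>m n k"
      by (rule eq_matI) (use X in auto)
    moreover have "0\<^sub>m k n * 1\<^sub>m n + 1\<^sub>m k * Y = Y" using Y by simp
    moreover have "0\<^sub>m k n * X + 1\<^sub>m k * 1\<^sub>m k = 1\<^sub>m k" using X by simp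
    ultimately show ?thesis by simp
  qed
  finally have e2: "L2 * K = four_block_mat (1\<^sub>m n - X * Y) (0\<^sub>m n k) Y (1\<^sub>m k)" .
  have dL1: "det L1 = 1" unfolding L1_def
    by (subst det_four_block_mat_upper_right_zero[of _ n _ k]) (use Y in auto)
  have dL2: "det L2 = 1" unfolding L2_def
    by (subst det_four_block_mat_lower_left_zero[of _ n _ k]) (use X in auto)
  have "det K = det (1\<^sub>m k - Y * X)"
  proof -
    have "det (L1 * K) = det L1 * det K" by (rule det_mult[OF L1 K])
    moreover have "det (L1 * K) = det (1\<^sub>m k - Y * X)" unfolding e1
      by (subst det_four_block_mat_lower_left_zero[of _ n _ k]) (use X Y in auto)
    ultimately show ?thesis using dL1 by simp
  qed
  moreover have "det K = det (1\<^sub>m n - X * Y)"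
  proof -
    have "det (L2 * K) = det L2 * det K" by (rule det_mult[OF L2 K])
    moreover have "det (L2 * K) = det (1\<^sub>m n - X * Y)" unfolding e2
      by (subst det_four_block_mat_upper_right_zero[of _ n _ k]) (use X Y in auto)
    ultimately show ?thesis using dL2 by simp
  qed
  ultimately show ?thesis by simp
qed

lemma diag_mult_index:
  assumes B: "B \<in> carrier_mat n m" and ij: "i < n" "j < m"
  shows "(mat n n (\<lambda>(i,j). if i = j then f i else 0) * B) $$ (i,j) = f i * B $$ (i,j)"
proof -
  have "(mat n n (\<lambda>(i,j). if i = j then f i else 0) * B) $$ (i,j) =
      (\<Sum>l\<in>{0..<n}. (if i = l then f i else 0) * B $$ (l,j))"
    using B ij by (simp add: scalar_prod_def)
  also have "\<dots> = (\<Sum>l\<in>{0..<n}. if l = i then f i * B $$ (i,j) else 0)"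
    by (rule sum.cong) auto
  also have "\<dots> = f i * B $$ (i,j)" using ij by simp
  finally show ?thesis .
qed

definition hh :: "nat \<Rightarrow> (nat \<Rightarrow> real) \<Rightarrow> real \<Rightarrow> (nat \<Rightarrow> real) \<Rightarrow> (nat \<Rightarrow> real) \<Rightarrow> real" where
  "hh n a x u v = (\<Sum>i<n. u i * v i / (x - a i))"

lemma det_rank2_eval:
  assumes x: "\<forall>i<n. x \<noteq> a i"
  shows "poly (char_poly (rank2_mod n a s t u w)) x =
    (\<Prod>i<n. x - a i) * ((1 - s * hh n a x u u) * (1 - t * hh n a x w w) - s * t * (hh n a x u w)^2)"
proof -
  define A where "A = rank2_mod n a s t u w"
  have A: "A \<in> carrier_mat n n" unfolding A_def rank2_mod_def by simp
  define Rm where "Rm = mat n n (\<lambda>(i,j). if i = j then x - a i else (0::real))"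
  define Xm where "Xm = mat n 2 (\<lambda>(i,c). (if c = 0 then u i else w i) / (x - a i))"
  define Ym where "Ym = mat 2 n (\<lambda>(c,j). if c = 0 then s * u j else t * w j)"
  have Rm: "Rm \<in> carrier_mat n n" and Xm: "Xm \<in> carrier_mat n 2" and Ym: "Ym \<in> carrier_mat 2 n"
    unfolding Rm_def Xm_def Ym_def by auto
  have XY: "(Xm * Ym) $$ (i,j) = u i * (s * u j) / (x - a i) + w i * (t * w j) / (x - a i)" if "i < n" "j < n" for i j
    using that unfolding Xm_def Ym_def by (simp add: scalar_prod_def numeral_2_eq_2)
  have eqm: "- char_matrix A x = Rm * (1\<^sub>m n - Xm * Ym)"
  proof (rule eq_matI)
    fix i j assume ij: "i < dim_row (Rm * (1\<^sub>m n - Xm * Ym))" "j < dim_col (Rm * (1\<^sub>m n - Xm * Ym))"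
    then have ij': "i < n" "j < n" using Rm Xm Ym by auto
    have Z: "1\<^sub>m n - Xm * Ym \<in> carrier_mat n n" using Xm Ym by auto
    have "(Rm * (1\<^sub>m n - Xm * Ym)) $$ (i,j) = (x - a i) * (1\<^sub>m n - Xm * Ym) $$ (i,j)"
      unfolding Rm_def by (rule diag_mult_index[OF Z ij'])
    also have "\<dots> = (x - a i) * ((if i = j then 1 else 0) - (u i * (s * u j) / (x - a i) + w i * (t * w j) / (x - a i)))"
      using ij' XY[OF ij'] Xm Ym by simp
    also have "\<dots> = (if i = j then x - a i else 0) - s * u i * u j - t * w i * w j"
    proof -
      have ne: "x - a i \<noteq> 0" using x ij' by auto
      have e1: "(x - a i) * (P / (x - a i)) = P" for P using ne by simp
      have "(x - a i) * ((if i = j then 1 else 0) - (u i * (s * u j) / (x - a i) + w i * (t * w j) / (x - a i)))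
         = (x - a i) * (if i = j then 1 else 0) - (x - a i) * (u i * (s * u j) / (x - a i)) - (x - a i) * (w i * (t * w j) / (x - a i))"
        by (simp add: algebra_simps)
      also have "\<dots> = (x - a i) * (if i = j then 1 else 0) - u i * (s * u j) - w i * (t * w j)"
        unfolding e1 ..
      finally show ?thesis by simp
    qed
    also have "\<dots> = (- char_matrix A x) $$ (i,j)"
      using ij' A unfolding char_matrix_def A_def rank2_mod_def by simp
    finally show "(- char_matrix A x) $$ (i,j) = (Rm * (1\<^sub>m n - Xm * Ym)) $$ (i,j)" ..
  qed (use A Rm Xm Ym in \<open>auto simp: char_matrix_def\<close>)
  have "poly (char_poly A) x = det (- char_matrix A x)" by (rule char_poly_matrix[OF A])
  also have "\<dots> = det Rm * det (1\<^sub>m n - Xm * Ym)" unfolding eqm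
    by (rule det_mult[OF Rm]) (use Xm Ym in auto)
  also have "det Rm = (\<Prod>i<n. x - a i)"
  proof -
    have "det Rm = prod_list (diag_mat Rm)"
      by (rule det_upper_triangular[OF _ Rm]) (auto simp: upper_triangular_def Rm_def)
    also have "\<dots> = (\<Prod>i<n. x - a i)" unfolding prod_list_diag_prod using Rm
      by (simp add: Rm_def atLeast0LessThan)
    finally show ?thesis .
  qed
  also have "det (1\<^sub>m n - Xm * Ym) = det (1\<^sub>m 2 - Ym * Xm)" by (rule sylvester_det[OF Xm Ym])
  also have "\<dots> = (1 - s * hh n a x u u) * (1 - t * hh n a x w w) - s * t * (hh n a x u w)^2"
  proof -
    have YX: "(Ym * Xm) $$ (c,d) = (\<Sum>i<n. (if c = 0 then s * u i else t * w i) * ((if d = 0 then u i else w i) / (x - a i)))"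
      if "c < 2" "d < 2" for c d
      using that unfolding Xm_def Ym_def by (simp add: scalar_prod_def atLeast0LessThan)
    have M: "1\<^sub>m 2 - Ym * Xm \<in> carrier_mat 2 2" using Xm Ym by auto
    have h1: "(\<Sum>i<n. s * u i * (u i / (x - a i))) = s * hh n a x u u" unfolding hh_def
      by (simp add: sum_distrib_left algebra_simps)
    have h2: "(\<Sum>i<n. t * w i * (w i / (x - a i))) = t * hh n a x w w" unfolding hh_def
      by (simp add: sum_distrib_left algebra_simps)
    have h3: "(\<Sum>i<n. s * u i * (w i / (x - a i))) = s * hh n a x u w" unfolding hh_def
      by (simp add: sum_distrib_left algebra_simps)
    have h4: "(\<Sum>i<n. t * w i * (u i / (x - a i))) = t * hh n a x u w" unfolding hh_def
      by (simp add: sum_distrib_left algebra_simps)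
    have y00: "(Ym * Xm) $$ (0,0) = s * hh n a x u u" using YX[of 0 0] h1 by simp
    have y11: "(Ym * Xm) $$ (1,1) = t * hh n a x w w" using YX[of 1 1] h2 by simp
    have y01: "(Ym * Xm) $$ (0,1) = s * hh n a x u w" using YX[of 0 1] h3 by simp
    have y10: "(Ym * Xm) $$ (1,0) = t * hh n a x u w" using YX[of 1 0] h4 by simp
    have m: "(1\<^sub>m 2 - Ym * Xm) $$ (i,j) = (if i = j then 1 else 0) - (Ym * Xm) $$ (i,j)" if "i < 2" "j < 2" for i j
      using that Xm Ym by simp
    have m00: "(1\<^sub>m 2 - Ym * Xm) $$ (0,0) = 1 - s * hh n a x u u" using m[of 0 0] y00 by simp
    have m11: "(1\<^sub>m 2 - Ym * Xm) $$ (1,1) = 1 - t * hh n a x w w" using m[of 1 1] y11 by simp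
    have m01: "(1\<^sub>m 2 - Ym * Xm) $$ (0,1) = - s * hh n a x u w" using m[of 0 1] y01 by simp
    have m10: "(1\<^sub>m 2 - Ym * Xm) $$ (1,0) = - t * hh n a x u w" using m[of 1 0] y10 by simp
    show ?thesis unfolding det2[OF M] m00 m11 m01 m10 by (simp add: power2_eq_square algebra_simps)
  qed
  finally show ?thesis unfolding A_def .
qed


definition secpoly :: "nat \<Rightarrow> (nat\<Rightarrow>real) \<Rightarrow> real \<Rightarrow> real \<Rightarrow> (nat\<Rightarrow>real) \<Rightarrow> (nat\<Rightarrow>real) \<Rightarrow> real poly" where
 "secpoly n a s t u w = PP a {..<n} - (\<Sum>q<n. smult (s * (u q)^2 + t * (w q)^2) (PP a ({..<n} - {q})))
    + smult (s * t / 2) (\<Sum>q<n. \<Sum>r<n. smult ((u q * w r - u r * w q)^2) (PP a ({..<n} - {q} - {r})))"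

lemma lagrange_sum:
  fixes u w e :: "nat \<Rightarrow> real"
  shows "(\<Sum>q<n. \<Sum>r<n. (u q * w r - u r * w q)^2 * e q * e r) =
    2 * ((\<Sum>q<n. u q * u q * e q) * (\<Sum>r<n. w r * w r * e r) - (\<Sum>q<n. u q * w q * e q)^2)"
proof -
  have "(\<Sum>q<n. \<Sum>r<n. (u q * w r - u r * w q)^2 * e q * e r) =
    (\<Sum>q<n. \<Sum>r<n. (u q * u q * e q) * (w r * w r * e r) + (w q * w q * e q) * (u r * u r * e r)
       - 2 * ((u q * w q * e q) * (u r * w r * e r)))"
    by (intro sum.cong refl) (simp add: power2_eq_square algebra_simps)
  also have "\<dots> = (\<Sum>q<n. u q * u q * e q) * (\<Sum>r<n. w r * w r * e r) + (\<Sum>q<n. w q * w q * e q) * (\<Sum>r<n. u r * u r * e r)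
       - 2 * ((\<Sum>q<n. u q * w q * e q) * (\<Sum>r<n. u r * w r * e r))"
  proof -
    have "(\<Sum>q<n. \<Sum>r<n. (u q * u q * e q) * (w r * w r * e r) + (w q * w q * e q) * (u r * u r * e r)
       - 2 * ((u q * w q * e q) * (u r * w r * e r))) =
      (\<Sum>q<n. \<Sum>r<n. (u q * u q * e q) * (w r * w r * e r)) + (\<Sum>q<n. \<Sum>r<n. (w q * w q * e q) * (u r * u r * e r))
       - 2 * (\<Sum>q<n. \<Sum>r<n. (u q * w q * e q) * (u r * w r * e r))"
      by (simp add: sum.distrib sum_subtractf sum_distrib_left)
    also have "\<dots> = (\<Sum>q<n. u q * u q * e q) * (\<Sum>r<n. w r * w r * e r) + (\<Sum>q<n. w q * w q * e q) * (\<Sum>r<n. u r * u r * e r)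
       - 2 * ((\<Sum>q<n. u q * w q * e q) * (\<Sum>r<n. u r * w r * e r))"
      by (simp only: sum_product)
    finally show ?thesis .
  qed
  finally show ?thesis by (simp add: power2_eq_square algebra_simps)
qed

lemma poly_secpoly:
  assumes x: "\<forall>i<n. x \<noteq> a i"
  shows "poly (secpoly n a s t u w) x =
    (\<Prod>i<n. x - a i) * ((1 - s * hh n a x u u) * (1 - t * hh n a x w w) - s * t * (hh n a x u w)^2)"
proof -
  define P where "P = (\<Prod>i<n. x - a i)"
  define e where "e q = 1 / (x - a q)" for q
  have p1: "poly (PP a ({..<n} - {q})) x = P * e q" if "q < n" for q
  proof -
    have "P = (x - a q) * (\<Prod>i\<in>{..<n} - {q}. x - a i)" unfolding P_def
      by (rule prod.remove) (use that in auto)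
    moreover have "x - a q \<noteq> 0" using x that by auto
    ultimately show ?thesis unfolding poly_PP e_def by (simp add: field_simps)
  qed
  have p2: "(u q * w r - u r * w q)^2 * poly (PP a ({..<n} - {q} - {r})) x = (u q * w r - u r * w q)^2 * (P * e q * e r)"
    if "q < n" "r < n" for q r
  proof (cases "q = r")
    case True then show ?thesis by simp
  next
    case False
    have "(\<Prod>i\<in>{..<n} - {q}. x - a i) = (x - a r) * (\<Prod>i\<in>{..<n} - {q} - {r}. x - a i)"
      by (rule prod.remove) (use that False in auto)
    then have "P * e q = (x - a r) * poly (PP a ({..<n} - {q} - {r})) x"
      using p1[OF that(1)] unfolding poly_PP by simp
    moreover have xr: "x - a r \<noteq> 0" using x that by auto
    ultimately have "poly (PP a ({..<n} - {q} - {r})) x = P * e q / (x - a r)"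
      by (simp add: eq_divide_eq mult.commute)
    then have "poly (PP a ({..<n} - {q} - {r})) x = P * e q * e r" unfolding e_def by simp
    then show ?thesis by simp
  qed
  have s1: "(\<Sum>q<n. (s * (u q)^2 + t * (w q)^2) * poly (PP a ({..<n} - {q})) x) = P * (s * hh n a x u u + t * hh n a x w w)"
  proof -
    have "(\<Sum>q<n. (s * (u q)^2 + t * (w q)^2) * poly (PP a ({..<n} - {q})) x) = (\<Sum>q<n. P * (s * (u q * u q * e q) + t * (w q * w q * e q)))"
      by (intro sum.cong refl) (simp add: p1 power2_eq_square algebra_simps)
    also have "\<dots> = P * (s * hh n a x u u + t * hh n a x w w)"
      unfolding hh_def e_def by (simp add: sum_distrib_left sum.distrib algebra_simps)
    finally show ?thesis .
  qed
  have s2: "(\<Sum>q<n. \<Sum>r<n. (u q * w r - u r * w q)^2 * poly (PP a ({..<n} - {q} - {r})) x) =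
      P * (2 * (hh n a x u u * hh n a x w w - (hh n a x u w)^2))"
  proof -
    have "(\<Sum>q<n. \<Sum>r<n. (u q * w r - u r * w q)^2 * poly (PP a ({..<n} - {q} - {r})) x) =
        (\<Sum>q<n. \<Sum>r<n. P * ((u q * w r - u r * w q)^2 * e q * e r))"
    proof (intro sum.cong refl)
      fix q r assume "q \<in> {..<n}" "r \<in> {..<n}"
      then show "(u q * w r - u r * w q)^2 * poly (PP a ({..<n} - {q} - {r})) x = P * ((u q * w r - u r * w q)^2 * e q * e r)"
        using p2[of q r] by (simp add: algebra_simps)
    qed
    also have "\<dots> = P * (\<Sum>q<n. \<Sum>r<n. (u q * w r - u r * w q)^2 * e q * e r)"
      by (simp add: sum_distrib_left)
    also have "\<dots> = P * (2 * (hh n a x u u * hh n a x w w - (hh n a x u w)^2))"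
      unfolding lagrange_sum hh_def e_def by simp
    finally show ?thesis .
  qed
  have "poly (secpoly n a s t u w) x = P - (\<Sum>q<n. (s * (u q)^2 + t * (w q)^2) * poly (PP a ({..<n} - {q})) x)
     + s * t / 2 * (\<Sum>q<n. \<Sum>r<n. (u q * w r - u r * w q)^2 * poly (PP a ({..<n} - {q} - {r})) x)"
    unfolding secpoly_def by (simp add: poly_sum poly_PP P_def)
  also have "\<dots> = P * ((1 - s * hh n a x u u) * (1 - t * hh n a x w w) - s * t * (hh n a x u w)^2)"
    unfolding s1 s2 by (simp add: algebra_simps)
  finally show ?thesis unfolding P_def .
qed

lemma char_poly_rank2: "char_poly (rank2_mod n a s t u w) = secpoly n a s t u w"
proof -
  define D where "D = char_poly (rank2_mod n a s t u w) - secpoly n a s t u w"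
  have sub: "- (a ` {..<n}) \<subseteq> {x. poly D x = 0}"
  proof
    fix x assume "x \<in> - (a ` {..<n})"
    then have "\<forall>i<n. x \<noteq> a i" by auto
    then show "x \<in> {x. poly D x = 0}" unfolding D_def using det_rank2_eval poly_secpoly by simp
  qed
  have "infinite (- (a ` {..<n}))"
    using Diff_infinite_finite[of "a ` {..<n}" UNIV] infinite_UNIV_char_0 by (simp add: Compl_eq_Diff_UNIV)
  then have "infinite {x. poly D x = 0}" using sub finite_subset by blast
  then have "D = 0" using poly_roots_finite by blast
  then show ?thesis unfolding D_def by simp
qed


lemma char_poly_rank1:
  "char_poly (rank2_mod n a s 0 u w) = SQ a (\<lambda>q. s * (u q)^2) {..<n}"
  unfolding char_poly_rank2 secpoly_def SQ_def by simp

lemma dsum_at: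
  fixes X :: "nat \<Rightarrow> nat \<Rightarrow> real"
  assumes Q: "finite Q" "i \<in> Q"
    and z: "\<And>q r. q \<in> Q \<Longrightarrow> r \<in> Q \<Longrightarrow> q \<noteq> i \<Longrightarrow> r \<noteq> i \<Longrightarrow> X q r = 0"
    and d: "X i i = 0" and sym: "\<And>q. q \<in> Q \<Longrightarrow> X q i = X i q"
  shows "(\<Sum>q\<in>Q. \<Sum>r\<in>Q. X q r) = 2 * (\<Sum>r\<in>Q-{i}. X i r)"
proof -
  have row_i: "(\<Sum>r\<in>Q. X i r) = (\<Sum>r\<in>Q-{i}. X i r)"
    using sum.remove[OF Q, of "X i"] d by simp
  have other: "(\<Sum>r\<in>Q. X q r) = X i q" if "q \<in> Q - {i}" for q
  proof -
    have "(\<Sum>r\<in>Q. X q r) = X q i + (\<Sum>r\<in>Q-{i}. X q r)" by (rule sum.remove[OF Q])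
    also have "(\<Sum>r\<in>Q-{i}. X q r) = 0" by (rule sum.neutral) (use that z in auto)
    finally show ?thesis using sym that by simp
  qed
  have "(\<Sum>q\<in>Q. \<Sum>r\<in>Q. X q r) = (\<Sum>r\<in>Q. X i r) + (\<Sum>q\<in>Q-{i}. \<Sum>r\<in>Q. X q r)"
    by (rule sum.remove[OF Q])
  also have "(\<Sum>q\<in>Q-{i}. \<Sum>r\<in>Q. X q r) = (\<Sum>q\<in>Q-{i}. X i q)" by (rule sum.cong[OF refl other])
  finally show ?thesis using row_i by simp
qed

lemma poly_char_rank2_at:
  assumes inj: "inj_on a {..<n}" and i: "i < n"
  shows "poly (char_poly (rank2_mod n a s t u w)) (a i) = g_plus n a s t u w i * (\<Prod>q\<in>{..<n}-{i}. a i - a q)"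
proof -
  define Q where "Q = {..<n}"
  define Pi where "Pi = (\<Prod>q\<in>Q-{i}. a i - a q)"
  have Q: "finite Q" "i \<in> Q" unfolding Q_def using i by auto
  have ne: "a i \<noteq> a r" if "r \<in> Q" "r \<noteq> i" for r
    using inj that Q unfolding Q_def by (auto dest: inj_onD)
  have t0: "poly (PP a Q) (a i) = 0" unfolding poly_PP using Q by (auto intro: prod_zero)
  have t1: "(\<Sum>q\<in>Q. c q * poly (PP a (Q - {q})) (a i)) = c i * Pi" for c :: "nat \<Rightarrow> real"
  proof -
    have "(\<Sum>q\<in>Q. c q * poly (PP a (Q - {q})) (a i)) = c i * poly (PP a (Q - {i})) (a i) + (\<Sum>q\<in>Q-{i}. c q * poly (PP a (Q - {q})) (a i))"
      by (rule sum.remove[OF Q])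
    also have "(\<Sum>q\<in>Q-{i}. c q * poly (PP a (Q - {q})) (a i)) = 0"
    proof (rule sum.neutral, rule ballI)
      fix q assume "q \<in> Q - {i}"
      then have "poly (PP a (Q - {q})) (a i) = 0" unfolding poly_PP using Q by (intro prod_zero) auto
      then show "c q * poly (PP a (Q - {q})) (a i) = 0" by simp
    qed
    finally show ?thesis unfolding Pi_def poly_PP by simp
  qed
  define k where "k q r = (u q * w r - u r * w q)^2" for q r
  define X where "X q r = k q r * poly (PP a (Q - {q} - {r})) (a i)" for q r
  have t2: "(\<Sum>q\<in>Q. \<Sum>r\<in>Q. X q r) = 2 * (\<Sum>r\<in>Q-{i}. k i r * (Pi / (a i - a r)))"
  proof -
    have "(\<Sum>q\<in>Q. \<Sum>r\<in>Q. X q r) = 2 * (\<Sum>r\<in>Q-{i}. X i r)"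
    proof (rule dsum_at[OF Q])
      fix q r assume "q \<in> Q" "r \<in> Q" "q \<noteq> i" "r \<noteq> i"
      then have "poly (PP a (Q - {q} - {r})) (a i) = 0" unfolding poly_PP using Q by (intro prod_zero) auto
      then show "X q r = 0" unfolding X_def by simp
    next
      show "X i i = 0" unfolding X_def k_def by simp
    next
      fix q assume "q \<in> Q"
      have "Q - {q} - {i} = Q - {i} - {q}" by auto
      moreover have "k q i = k i q" unfolding k_def by (simp add: power2_eq_square algebra_simps)
      ultimately show "X q i = X i q" unfolding X_def by simp
    qed
    also have "(\<Sum>r\<in>Q-{i}. X i r) = (\<Sum>r\<in>Q-{i}. k i r * (Pi / (a i - a r)))"
    proof (rule sum.cong[OF refl])
      fix r assume r: "r \<in> Q - {i}"
      have "Pi = (a i - a r) * (\<Prod>q\<in>Q-{i}-{r}. a i - a q)" unfolding Pi_def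
        by (rule prod.remove) (use Q r in auto)
      moreover have "a i - a r \<noteq> 0" using ne r by auto
      ultimately have "poly (PP a (Q - {i} - {r})) (a i) = Pi / (a i - a r)"
        unfolding poly_PP by (simp add: eq_divide_eq mult.commute)
      then show "X i r = k i r * (Pi / (a i - a r))" unfolding X_def by simp
    qed
    finally show ?thesis .
  qed
  have "poly (char_poly (rank2_mod n a s t u w)) (a i) =
     - ((s * (u i)^2 + t * (w i)^2) * Pi) + s * t / 2 * (2 * (\<Sum>r\<in>Q-{i}. k i r * (Pi / (a i - a r))))"
    unfolding char_poly_rank2 secpoly_def Q_def[symmetric] t2[symmetric]
    by (simp add: poly_sum t0 X_def k_def t1[of "\<lambda>q. s * (u q)^2 + t * (w q)^2"])
  also have "\<dots> = (- s * t * (\<Sum>q\<in>Q-{i}. (u q * w i - u i * w q)^2 / (a q - a i)) - s * (u i)^2 - t * (w i)^2) * Pi"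
  proof -
    have "(\<Sum>r\<in>Q-{i}. k i r * (Pi / (a i - a r))) = - (\<Sum>q\<in>Q-{i}. (u q * w i - u i * w q)^2 / (a q - a i)) * Pi"
    proof -
      have "(\<Sum>r\<in>Q-{i}. k i r * (Pi / (a i - a r))) = (\<Sum>q\<in>Q-{i}. - ((u q * w i - u i * w q)^2 / (a q - a i)) * Pi)"
      proof (rule sum.cong[OF refl])
        fix q assume "q \<in> Q - {i}"
        have "k i q = (u q * w i - u i * w q)^2" unfolding k_def by (simp add: power2_eq_square algebra_simps)
        moreover have "a i - a q = - (a q - a i)" by simp
        ultimately show "k i q * (Pi / (a i - a q)) = - ((u q * w i - u i * w q)^2 / (a q - a i)) * Pi"
          by (simp add: divide_simps algebra_simps)
      qed
      also have "\<dots> = - (\<Sum>q\<in>Q-{i}. (u q * w i - u i * w q)^2 / (a q - a i)) * Pi"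
        by (simp add: sum_distrib_right sum_negf)
      finally show ?thesis .
    qed
    then show ?thesis by (simp add: algebra_simps)
  qed
  finally show ?thesis unfolding g_plus_def Pi_def Q_def .
qed


lemma sym_real_eigen:
  fixes A :: "real mat"
  assumes A: "A \<in> carrier_mat n n" and n: "n > 0"
    and sym: "\<And>i j. i < n \<Longrightarrow> j < n \<Longrightarrow> A $$ (i,j) = A $$ (j,i)"
  shows "\<exists>r v. v \<in> carrier_vec n \<and> v \<noteq> 0\<^sub>v n \<and> A *\<^sub>v v = r \<cdot>\<^sub>v v"
proof -
  define Ac where "Ac = map_mat complex_of_real A"
  have Ac: "Ac \<in> carrier_mat n n" unfolding Ac_def using A by simp
  have cp: "char_poly Ac = map_poly complex_of_real (char_poly A)"
    unfolding Ac_def by (rule of_real_hom.char_poly_hom[OF A])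
  have "degree (char_poly Ac) = n" using degree_monic_char_poly[OF Ac] by simp
  then have dn: "degree (char_poly Ac) \<noteq> 0" using n by simp
  have "\<not> constant (poly (char_poly Ac))" using constant_degree[of "char_poly Ac"] dn by blast
  then obtain z where z: "poly (char_poly Ac) z = 0" using fundamental_theorem_of_algebra by blast
  have "eigenvalue Ac z" using eigenvalue_root_char_poly[OF Ac] z by simp
  then obtain x where x: "eigenvector Ac x z" unfolding eigenvalue_def by auto
  then have xc: "x \<in> carrier_vec n" and x0: "x \<noteq> 0\<^sub>v n" and ev: "Ac *\<^sub>v x = z \<cdot>\<^sub>v x"
    unfolding eigenvector_def using Ac by auto
  have Acx: "(Ac *\<^sub>v x) $ i = (\<Sum>j<n. complex_of_real (A $$ (i,j)) * x $ j)" if "i < n" for i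
    using that Ac xc A unfolding Ac_def by (simp add: scalar_prod_def atLeast0LessThan)
  define N where "N = (\<Sum>i<n. cnj (x$i) * x$i)"
  define s where "s = (\<Sum>i<n. cnj (x$i) * (Ac *\<^sub>v x) $ i)"
  have s1: "s = z * N" unfolding s_def N_def using ev xc by (simp add: sum_distrib_left algebra_simps)
  have s2: "s = (\<Sum>i<n. \<Sum>j<n. cnj (x$i) * complex_of_real (A $$ (i,j)) * x $ j)"
    unfolding s_def by (simp add: Acx sum_distrib_left algebra_simps)
  have "cnj s = (\<Sum>i<n. \<Sum>j<n. x$i * complex_of_real (A $$ (i,j)) * cnj (x $ j))"
    unfolding s2 by simp
  also have "\<dots> = (\<Sum>j<n. \<Sum>i<n. x$i * complex_of_real (A $$ (i,j)) * cnj (x $ j))"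
    by (rule sum.swap)
  also have "\<dots> = s" unfolding s2
    by (intro sum.cong refl) (simp add: sym algebra_simps)
  finally have cs: "cnj s = s" .
  have cN: "cnj N = N" unfolding N_def by (simp add: mult.commute)
  have "N \<noteq> 0"
  proof
    assume N0: "N = 0"
    have "Re N = (\<Sum>i<n. Re (x$i) * Re (x$i) + Im (x$i) * Im (x$i))" unfolding N_def
      by (simp add: Re_sum)
    then have "(\<Sum>i<n. Re (x$i) * Re (x$i) + Im (x$i) * Im (x$i)) = 0" using N0 by simp
    then have "\<forall>i\<in>{..<n}. Re (x$i) * Re (x$i) + Im (x$i) * Im (x$i) = 0"
      by (subst (asm) sum_nonneg_eq_0_iff) auto
    then have "\<forall>i<n. x$i = 0"
      by (auto simp: complex_eq_iff add_nonneg_eq_0_iff)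
    then have "x = 0\<^sub>v n" using xc by (intro eq_vecI) auto
    with x0 show False by simp
  qed
  have "cnj z * N = z * N"
  proof -
    have "cnj z * N = cnj (z * N)" using cN by simp
    also have "\<dots> = z * N" using cs s1 by simp
    finally show ?thesis .
  qed
  then have "cnj z = z" using \<open>N \<noteq> 0\<close> by simp
  then have zr: "z = complex_of_real (Re z)" by (metis Reals_cnj_iff complex_is_Real_iff of_real_Re)
  have "complex_of_real (poly (char_poly A) (Re z)) = poly (char_poly Ac) z"
    unfolding cp by (subst zr) (simp add: of_real_hom.poly_map_poly)
  then have "poly (char_poly A) (Re z) = 0" using z by simp
  then have "eigenvalue A (Re z)" using eigenvalue_root_char_poly[OF A] by simp
  then obtain v where "eigenvector A v (Re z)" unfolding eigenvalue_def by auto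
  then show ?thesis unfolding eigenvector_def using A by auto
qed


lemma sum_if_eq: "i < (N::nat) \<Longrightarrow> (\<Sum>l<N. if l = i then g l else 0) = (g i :: real)"
proof -
  assume i: "i < N"
  have "(\<Sum>l<N. if l = i then g l else 0) = (if i = i then g i else 0) + (\<Sum>l\<in>{..<N}-{i}. if l = i then g l else 0)"
    by (rule sum.remove) (use i in auto)
  also have "(\<Sum>l\<in>{..<N}-{i}. if l = i then g l else 0) = 0" by (rule sum.neutral) auto
  finally show ?thesis by simp
qed

lemma sum_delta_l: "i < (N::nat) \<Longrightarrow> (\<Sum>l<N. (if i = l then 1 else 0) * f l) = (f i :: real)"
proof -
  assume i: "i < N"
  have "(\<Sum>l<N. (if i = l then 1 else 0) * f l) = (\<Sum>l<N. if l = i then f l else 0)" by (rule sum.cong) auto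
  then show ?thesis using sum_if_eq[OF i] by simp
qed

lemma sum_delta_r: "j < (N::nat) \<Longrightarrow> (\<Sum>l<N. f l * (if l = j then 1 else 0)) = (f j :: real)"
proof -
  assume j: "j < N"
  have "(\<Sum>l<N. f l * (if l = j then 1 else 0)) = (\<Sum>l<N. if l = j then f l else 0)" by (rule sum.cong) auto
  then show ?thesis using sum_if_eq[OF j] by simp
qed

lemma householder:
  fixes v :: "real vec"
  assumes vc: "v \<in> carrier_vec N" and N: "N > 0" and nv: "(\<Sum>i<N. (v$i)^2) = 1"
  shows "\<exists>H. H \<in> carrier_mat N N \<and> transpose_mat H = H \<and> H * H = 1\<^sub>m N \<and> (\<forall>i<N. H $$ (i,0) = v $ i)"
proof (cases "v$0 = 1")
  case True
  have "(\<Sum>i<N. (v$i)^2) = (v$0)^2 + (\<Sum>i\<in>{..<N}-{0}. (v$i)^2)"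
    by (rule sum.remove) (use N in auto)
  then have "(\<Sum>i\<in>{..<N}-{0}. (v$i)^2) = 0" using nv True by simp
  then have z: "\<forall>i\<in>{..<N}-{0}. (v$i)^2 = 0" by (subst (asm) sum_nonneg_eq_0_iff) auto
  show ?thesis
  proof (rule exI[of _ "1\<^sub>m N"], intro conjI allI impI)
    fix i assume "i < N"
    then show "1\<^sub>m N $$ (i,0) = v $ i" using z True N by (cases "i = 0") auto
  qed auto
next
  case False
  define w where "w i = v$i - (if i = 0 then 1 else 0)" for i
  define c where "c = (\<Sum>l<N. w l * w l)"
  have c: "c = 2 - 2 * v$0"
  proof -
    have 1: "c = w 0 * w 0 + (\<Sum>l\<in>{..<N}-{0}. w l * w l)" unfolding c_def
      by (rule sum.remove) (use N in auto)
    have 2: "(\<Sum>l\<in>{..<N}-{0}. w l * w l) = (\<Sum>l\<in>{..<N}-{0}. (v$l)^2)"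
      by (rule sum.cong) (auto simp: w_def power2_eq_square)
    have 3: "(\<Sum>i<N. (v$i)^2) = (v$0)^2 + (\<Sum>l\<in>{..<N}-{0}. (v$l)^2)"
      by (rule sum.remove) (use N in auto)
    show ?thesis using 1 2 3 nv unfolding w_def by (simp add: power2_eq_square algebra_simps)
  qed
  have c0: "c \<noteq> 0" using c False by simp
  define H where "H = mat N N (\<lambda>(i,j). (if i = j then 1 else 0) - 2 * w i * w j / c)"
  have Hc: "H \<in> carrier_mat N N" unfolding H_def by simp
  have HT: "transpose_mat H = H" unfolding H_def by (rule eq_matI) (auto simp: mult.commute)
  have HH: "H * H = 1\<^sub>m N"
  proof (rule eq_matI)
    fix i j assume ij: "i < dim_row (1\<^sub>m N)" "j < dim_col (1\<^sub>m N)"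
    then have i: "i < N" and j: "j < N" by auto
    have "(H * H) $$ (i,j) = (\<Sum>l<N. ((if i = l then 1 else 0) - 2 * w i * w l / c) * ((if l = j then 1 else 0) - 2 * w l * w j / c))"
      using i j unfolding H_def by (simp add: scalar_prod_def atLeast0LessThan)
    also have "\<dots> = (\<Sum>l<N. (if i = l then 1 else 0) * (if l = j then 1 else 0))
        - (\<Sum>l<N. (if i = l then 1 else 0) * (2 * w l * w j / c))
        - (\<Sum>l<N. (2 * w i * w l / c) * (if l = j then 1 else 0))
        + (\<Sum>l<N. (2 * w i * w l / c) * (2 * w l * w j / c))"
    proof -
      have "(\<Sum>l<N. ((if i = l then 1 else 0) - 2 * w i * w l / c) * ((if l = j then 1 else 0) - 2 * w l * w j / c)) =
        (\<Sum>l<N. (if i = l then 1 else 0) * (if l = j then 1 else 0) - (if i = l then 1 else 0) * (2 * w l * w j / c)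
          - (2 * w i * w l / c) * (if l = j then 1 else 0) + (2 * w i * w l / c) * (2 * w l * w j / c))"
        by (rule sum.cong) (simp_all add: algebra_simps)
      then show ?thesis by (simp only: sum.distrib sum_subtractf)
    qed
    also have "\<dots> = (if i = j then 1 else 0) - 2 * w i * w j / c - 2 * w i * w j / c + 4 * w i * w j / c"
    proof -
      have a: "(\<Sum>l<N. (if i = l then 1 else 0) * (if l = j then 1 else 0)) = (if i = j then 1 else (0::real))"
        using sum_delta_l[OF i, of "\<lambda>l. if l = j then 1 else 0"] by (simp only:)
      have b: "(\<Sum>l<N. (if i = l then 1 else 0) * (2 * w l * w j / c)) = 2 * w i * w j / c"
        by (rule sum_delta_l[OF i])
      have d: "(\<Sum>l<N. (2 * w i * w l / c) * (if l = j then 1 else 0)) = 2 * w i * w j / c"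
        by (rule sum_delta_r[OF j])
      have e0: "(\<Sum>l<N. (2 * w i * w l / c) * (2 * w l * w j / c)) = 4 * w i * w j / (c * c) * (\<Sum>l<N. w l * w l)"
        by (simp add: sum_distrib_left sum_divide_distrib algebra_simps)
      have e: "(\<Sum>l<N. (2 * w i * w l / c) * (2 * w l * w j / c)) = 4 * w i * w j / (c * c) * c"
        using e0 unfolding c_def[symmetric] .
      show ?thesis unfolding a b d e using c0 by simp
    qed
    also have "\<dots> = 1\<^sub>m N $$ (i,j)" using i j by simp
    finally show "(H * H) $$ (i,j) = 1\<^sub>m N $$ (i,j)" .
  qed (use Hc in auto)
  have col0: "H $$ (i,0) = v $ i" if "i < N" for i
  proof -
    have w0: "w 0 = v$0 - 1" unfolding w_def by simp
    have "H $$ (i,0) = (if i = 0 then 1 else 0) - 2 * w i * w 0 / c" unfolding H_def using that N by simp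
    also have "2 * w i * w 0 / c = - w i" unfolding w0 c using False by (simp add: field_simps)
    finally show ?thesis unfolding w_def by simp
  qed
  show ?thesis using Hc HT HH col0 by blast
qed


lemma spectral:
  fixes A :: "real mat"
  assumes "A \<in> carrier_mat n n" "\<And>i j. i < n \<Longrightarrow> j < n \<Longrightarrow> A $$ (i,j) = A $$ (j,i)"
  shows "\<exists>Q \<mu>. Q \<in> carrier_mat n n \<and> transpose_mat Q * Q = 1\<^sub>m n \<and> Q * transpose_mat Q = 1\<^sub>m n
     \<and> transpose_mat Q * A * Q = mat n n (\<lambda>(i,j). if i = j then \<mu> i else 0)"
  using assms
proof (induction n arbitrary: A)
  case 0
  show ?case
    by (rule exI[of _ "1\<^sub>m 0"], rule exI[of _ "\<lambda>_. 0"]) (use 0 in \<open>auto intro!: eq_matI\<close>)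
next
  case (Suc n A)
  define N where "N = Suc n"
  have Ac: "A \<in> carrier_mat N N" and sym: "\<And>i j. i < N \<Longrightarrow> j < N \<Longrightarrow> A $$ (i,j) = A $$ (j,i)"
    using Suc.prems unfolding N_def by auto
  obtain r v where v: "v \<in> carrier_vec N" "v \<noteq> 0\<^sub>v N" "A *\<^sub>v v = r \<cdot>\<^sub>v v"
    using sym_real_eigen[OF Ac _ sym] unfolding N_def by auto
  define S where "S = (\<Sum>i<N. (v$i)^2)"
  have S: "S > 0"
  proof -
    obtain i where i: "i < N" "v$i \<noteq> 0"
    proof (rule ccontr)
      assume "\<not> thesis"
      then have "\<forall>i<N. v$i = 0" using that by blast
      then have "v = 0\<^sub>v N" using v(1) by (intro eq_vecI) auto
      with v(2) show False by simp
    qed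
    have "(v$i)^2 \<le> S" unfolding S_def by (rule member_le_sum) (use i in auto)
    moreover have "(v$i)^2 > 0" using i by simp
    ultimately show ?thesis by linarith
  qed
  define \<nu> where "\<nu> = sqrt S"
  have \<nu>: "\<nu> > 0" "\<nu>^2 = S" unfolding \<nu>_def using S by auto
  define v' where "v' = (1/\<nu>) \<cdot>\<^sub>v v"
  have v'c: "v' \<in> carrier_vec N" unfolding v'_def using v by simp
  have nv': "(\<Sum>i<N. (v'$i)^2) = 1"
  proof -
    have "(\<Sum>i<N. (v'$i)^2) = (\<Sum>i<N. (v$i)^2 / \<nu>^2)"
      by (rule sum.cong) (use v(1) in \<open>auto simp: v'_def power_divide\<close>)
    also have "\<dots> = S / \<nu>^2" unfolding S_def by (simp add: sum_divide_distrib)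
    finally show ?thesis using \<nu> S by simp
  qed
  have Av': "A *\<^sub>v v' = r \<cdot>\<^sub>v v'"
    unfolding v'_def using Ac v by (simp add: mult_mat_vec smult_smult_assoc mult.commute)
  obtain H where H: "H \<in> carrier_mat N N" "transpose_mat H = H" "H * H = 1\<^sub>m N" "\<And>i. i < N \<Longrightarrow> H $$ (i,0) = v' $ i"
    using householder[OF v'c _ nv'] unfolding N_def by auto
  have Hcol: "col H 0 = v'" using H v'c unfolding N_def by (intro eq_vecI) auto
  define B where "B = H * A * H"
  have Bc: "B \<in> carrier_mat N N" unfolding B_def using H Ac by auto
  have AT: "transpose_mat A = A" using Ac sym by (intro eq_matI) auto
  have BT: "transpose_mat B = B"
  proof -
    have "transpose_mat B = transpose_mat H * transpose_mat (H * A)"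
      unfolding B_def by (rule transpose_mult) (use H Ac in auto)
    also have "transpose_mat (H * A) = transpose_mat A * transpose_mat H"
      by (rule transpose_mult) (use H Ac in auto)
    finally have "transpose_mat B = H * (A * H)" using H AT by simp
    also have "\<dots> = B" unfolding B_def by (rule assoc_mult_mat[symmetric]) (use H Ac in auto)
    finally show ?thesis .
  qed
  have Bsym: "B $$ (i,j) = B $$ (j,i)" if "i < N" "j < N" for i j
  proof -
    have "B $$ (i,j) = transpose_mat B $$ (i,j)" using BT by simp
    also have "\<dots> = B $$ (j,i)" using that Bc by simp
    finally show ?thesis .
  qed
  have Bcol: "B $$ (i,0) = (if i = 0 then r else 0)" if i: "i < N" for i
  proof -
    have B2: "B = H * (A * H)" unfolding B_def by (rule assoc_mult_mat) (use H Ac in auto)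
    have "B $$ (i,0) = row H i \<bullet> col (A * H) 0"
      unfolding B2 using H Ac i unfolding N_def by simp
    also have "col (A * H) 0 = A *\<^sub>v col H 0" by (rule col_mult2) (use H Ac in \<open>auto simp: N_def\<close>)
    also have "\<dots> = r \<cdot>\<^sub>v v'" unfolding Hcol by (rule Av')
    also have "row H i \<bullet> (r \<cdot>\<^sub>v v') = r * (row H i \<bullet> v')"
      by (rule scalar_prod_smult_right) (use H v'c i in auto)
    also have "row H i \<bullet> v' = (H * H) $$ (i,0)" unfolding Hcol[symmetric] using H(1) i unfolding N_def by simp
    also have "\<dots> = (if i = 0 then 1 else 0)" unfolding H(3) using i unfolding N_def by simp
    finally show ?thesis by simp
  qed
  define B' where "B' = mat n n (\<lambda>(i,j). B $$ (Suc i, Suc j))"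
  have B'c: "B' \<in> carrier_mat n n" unfolding B'_def by simp
  have B'sym: "\<And>i j. i < n \<Longrightarrow> j < n \<Longrightarrow> B' $$ (i,j) = B' $$ (j,i)"
    unfolding B'_def using Bsym unfolding N_def by auto
  have Bblock: "B = four_block_mat (mat 1 1 (\<lambda>_. r)) (0\<^sub>m 1 n) (0\<^sub>m n 1) B'"
  proof (rule eq_matI)
    fix i j assume ij: "i < dim_row (four_block_mat (mat 1 1 (\<lambda>_. r)) (0\<^sub>m 1 n) (0\<^sub>m n 1) B')"
       "j < dim_col (four_block_mat (mat 1 1 (\<lambda>_. r)) (0\<^sub>m 1 n) (0\<^sub>m n 1) B')"
    then have i: "i < N" and j: "j < N" using B'c unfolding N_def by auto
    show "B $$ (i,j) = four_block_mat (mat 1 1 (\<lambda>_. r)) (0\<^sub>m 1 n) (0\<^sub>m n 1) B' $$ (i,j)"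
    proof (cases "i = 0")
      case True
      then show ?thesis using Bcol[OF j] Bsym[OF i j] j B'c unfolding N_def by (cases "j = 0") auto
    next
      case False
      then obtain i' where i': "i = Suc i'" by (cases i) auto
      show ?thesis
      proof (cases "j = 0")
        case True then show ?thesis using Bcol[OF i] i' i B'c unfolding N_def by auto
      next
        case False
        then obtain j' where j': "j = Suc j'" by (cases j) auto
        show ?thesis using i j i' j' B'c unfolding B'_def N_def by auto
      qed
    qed
  qed (use Bc B'c in \<open>auto simp: N_def\<close>)
  obtain Q' \<mu>' where Q': "Q' \<in> carrier_mat n n" "transpose_mat Q' * Q' = 1\<^sub>m n" "Q' * transpose_mat Q' = 1\<^sub>m n"
      "transpose_mat Q' * B' * Q' = mat n n (\<lambda>(i,j). if i = j then \<mu>' i else 0)"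
    using Suc.IH[OF B'c B'sym] by blast
  define Q2 where "Q2 = four_block_mat (1\<^sub>m 1) (0\<^sub>m 1 n) (0\<^sub>m n 1) Q'"
  have Q2c: "Q2 \<in> carrier_mat N N" unfolding Q2_def N_def using Q' by auto
  have Q2T: "transpose_mat Q2 = four_block_mat (1\<^sub>m 1) (0\<^sub>m 1 n) (0\<^sub>m n 1) (transpose_mat Q')"
    unfolding Q2_def by (subst transpose_four_block_mat) (use Q' in auto)
  have Q'T: "transpose_mat Q' \<in> carrier_mat n n" using Q' by simp
  have Q2Q2: "transpose_mat Q2 * Q2 = 1\<^sub>m N"
  proof -
    have "transpose_mat Q2 * Q2 = four_block_mat (1\<^sub>m 1) (0\<^sub>m 1 n) (0\<^sub>m n 1) (transpose_mat Q') * four_block_mat (1\<^sub>m 1) (0\<^sub>m 1 n) (0\<^sub>m n 1) Q'"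
      unfolding Q2T by (simp only: Q2_def)
    also have "\<dots> = four_block_mat (1\<^sub>m 1 * 1\<^sub>m 1 + 0\<^sub>m 1 n * 0\<^sub>m n 1) (1\<^sub>m 1 * 0\<^sub>m 1 n + 0\<^sub>m 1 n * Q')
       (0\<^sub>m n 1 * 1\<^sub>m 1 + transpose_mat Q' * 0\<^sub>m n 1) (0\<^sub>m n 1 * 0\<^sub>m 1 n + transpose_mat Q' * Q')"
      by (rule mult_four_block_mat) (use Q' in auto)
    also have "\<dots> = four_block_mat (1\<^sub>m 1) (0\<^sub>m 1 n) (0\<^sub>m n 1) (1\<^sub>m n)"
      using Q' Q'T by simp
    also have "\<dots> = 1\<^sub>m N" unfolding N_def by simp
    finally show ?thesis .
  qed
  have Q2Q2': "Q2 * transpose_mat Q2 = 1\<^sub>m N"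
  proof -
    have "Q2 * transpose_mat Q2 = four_block_mat (1\<^sub>m 1) (0\<^sub>m 1 n) (0\<^sub>m n 1) Q' * four_block_mat (1\<^sub>m 1) (0\<^sub>m 1 n) (0\<^sub>m n 1) (transpose_mat Q')"
      unfolding Q2T by (simp only: Q2_def)
    also have "\<dots> = four_block_mat (1\<^sub>m 1 * 1\<^sub>m 1 + 0\<^sub>m 1 n * 0\<^sub>m n 1) (1\<^sub>m 1 * 0\<^sub>m 1 n + 0\<^sub>m 1 n * transpose_mat Q')
       (0\<^sub>m n 1 * 1\<^sub>m 1 + Q' * 0\<^sub>m n 1) (0\<^sub>m n 1 * 0\<^sub>m 1 n + Q' * transpose_mat Q')"
      by (rule mult_four_block_mat) (use Q' in auto)
    also have "\<dots> = four_block_mat (1\<^sub>m 1) (0\<^sub>m 1 n) (0\<^sub>m n 1) (1\<^sub>m n)"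
      using Q' Q'T by simp
    also have "\<dots> = 1\<^sub>m N" unfolding N_def by simp
    finally show ?thesis .
  qed
  define R where "R = mat 1 1 (\<lambda>_. r)"
  have Rc: "R \<in> carrier_mat 1 1" unfolding R_def by simp
  have D: "transpose_mat Q2 * B * Q2 = four_block_mat R (0\<^sub>m 1 n) (0\<^sub>m n 1) (transpose_mat Q' * B' * Q')"
  proof -
    have "transpose_mat Q2 * B = four_block_mat (1\<^sub>m 1) (0\<^sub>m 1 n) (0\<^sub>m n 1) (transpose_mat Q') * four_block_mat R (0\<^sub>m 1 n) (0\<^sub>m n 1) B'"
      unfolding Q2T by (simp only: Bblock R_def)
    also have "\<dots> = four_block_mat (1\<^sub>m 1 * R + 0\<^sub>m 1 n * 0\<^sub>m n 1) (1\<^sub>m 1 * 0\<^sub>m 1 n + 0\<^sub>m 1 n * B')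
       (0\<^sub>m n 1 * R + transpose_mat Q' * 0\<^sub>m n 1) (0\<^sub>m n 1 * 0\<^sub>m 1 n + transpose_mat Q' * B')"
      by (rule mult_four_block_mat) (use Q' B'c Rc in auto)
    also have "\<dots> = four_block_mat R (0\<^sub>m 1 n) (0\<^sub>m n 1) (transpose_mat Q' * B')"
      using Q' Q'T B'c Rc by simp
    finally have 1: "transpose_mat Q2 * B = four_block_mat R (0\<^sub>m 1 n) (0\<^sub>m n 1) (transpose_mat Q' * B')" .
    have "transpose_mat Q2 * B * Q2 = four_block_mat R (0\<^sub>m 1 n) (0\<^sub>m n 1) (transpose_mat Q' * B') * four_block_mat (1\<^sub>m 1) (0\<^sub>m 1 n) (0\<^sub>m n 1) Q'"
      unfolding 1 by (simp only: Q2_def)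
    also have "\<dots> = four_block_mat (R * 1\<^sub>m 1 + 0\<^sub>m 1 n * 0\<^sub>m n 1) (R * 0\<^sub>m 1 n + 0\<^sub>m 1 n * Q')
       (0\<^sub>m n 1 * 1\<^sub>m 1 + (transpose_mat Q' * B') * 0\<^sub>m n 1) (0\<^sub>m n 1 * 0\<^sub>m 1 n + (transpose_mat Q' * B') * Q')"
      by (rule mult_four_block_mat) (use Q' B'c Rc in auto)
    also have "\<dots> = four_block_mat R (0\<^sub>m 1 n) (0\<^sub>m n 1) (transpose_mat Q' * B' * Q')"
      using Q' Q'T B'c Rc by simp
    finally show ?thesis .
  qed
  define \<mu> where "\<mu> i = (if i = 0 then r else \<mu>' (i - 1))" for i
  have Ddiag: "transpose_mat Q2 * B * Q2 = mat N N (\<lambda>(i,j). if i = j then \<mu> i else 0)"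
    unfolding D Q'(4) R_def
  proof (rule eq_matI)
    fix i j assume "i < dim_row (mat N N (\<lambda>(i,j). if i = j then \<mu> i else 0))" "j < dim_col (mat N N (\<lambda>(i,j). if i = j then \<mu> i else 0))"
    then have i: "i < N" and j: "j < N" by auto
    show "four_block_mat (mat 1 1 (\<lambda>_. r)) (0\<^sub>m 1 n) (0\<^sub>m n 1) (mat n n (\<lambda>(i,j). if i = j then \<mu>' i else 0)) $$ (i,j) =
       mat N N (\<lambda>(i,j). if i = j then \<mu> i else 0) $$ (i,j)"
      using i j unfolding N_def \<mu>_def by (cases "i = 0"; cases "j = 0") auto
  qed (auto simp: N_def)
  define Q where "Q = H * Q2"
  have Qc: "Q \<in> carrier_mat N N" unfolding Q_def using H Q2c by auto
  have QT: "transpose_mat Q = transpose_mat Q2 * H"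
    unfolding Q_def using transpose_mult[of H N N Q2 N] H Q2c by simp
  have H1: "H \<in> carrier_mat N N" by (rule H(1))
  have HTc: "transpose_mat Q2 \<in> carrier_mat N N" using Q2c by simp
  have "transpose_mat Q * Q = (transpose_mat Q2 * H) * (H * Q2)" unfolding QT by (simp only: Q_def)
  also have "\<dots> = transpose_mat Q2 * (H * (H * Q2))" by (rule assoc_mult_mat[OF HTc H1]) (use H1 Q2c in auto)
  also have "H * (H * Q2) = (H * H) * Q2" by (rule assoc_mult_mat[symmetric, OF H1 H1 Q2c])
  finally have QO: "transpose_mat Q * Q = 1\<^sub>m N" using H(3) Q2c Q2Q2 by simp
  have "Q * transpose_mat Q = (H * Q2) * (transpose_mat Q2 * H)" unfolding QT by (simp only: Q_def)
  also have "\<dots> = H * (Q2 * (transpose_mat Q2 * H))" by (rule assoc_mult_mat[OF H1 Q2c]) (use H1 HTc in auto)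
  also have "Q2 * (transpose_mat Q2 * H) = (Q2 * transpose_mat Q2) * H"
    by (rule assoc_mult_mat[symmetric, OF Q2c HTc H1])
  finally have QO': "Q * transpose_mat Q = 1\<^sub>m N" using H(3) H(1) Q2Q2' by simp
  have "transpose_mat Q * A * Q = transpose_mat Q2 * B * Q2"
  proof -
    have "transpose_mat Q * A * Q = (transpose_mat Q2 * H) * A * (H * Q2)" unfolding QT by (simp only: Q_def)
    also have "\<dots> = transpose_mat Q2 * (H * A * H) * Q2"
      using H1 Q2c Ac HTc by (simp add: assoc_mult_mat[of _ N N _ N _ N])
    finally show ?thesis unfolding B_def .
  qed
  then have "transpose_mat Q * A * Q = mat N N (\<lambda>(i,j). if i = j then \<mu> i else 0)" using Ddiag by simp
  then show ?case using Qc QO QO' unfolding N_def by blast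
qed


lemma QTXQ_index:
  fixes Q X :: "real mat"
  assumes Q: "Q \<in> carrier_mat n n" and X: "X \<in> carrier_mat n n" and ij: "i < n" "j < n"
  shows "(transpose_mat Q * X * Q) $$ (i,j) = (\<Sum>l<n. (\<Sum>k<n. Q $$ (k,i) * X $$ (k,l)) * Q $$ (l,j))"
proof -
  have "(transpose_mat Q * X * Q) $$ (i,j) = (\<Sum>k<n. Q $$ (k,i) * (\<Sum>l<n. X $$ (k,l) * Q $$ (l,j)))"
    using assms by (simp add: scalar_prod_def atLeast0LessThan)
  also have "\<dots> = (\<Sum>k<n. \<Sum>l<n. Q $$ (k,i) * X $$ (k,l) * Q $$ (l,j))"
    by (simp add: sum_distrib_left mult.assoc)
  also have "\<dots> = (\<Sum>l<n. \<Sum>k<n. Q $$ (k,i) * X $$ (k,l) * Q $$ (l,j))" by (rule sum.swap)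
  also have "\<dots> = (\<Sum>l<n. (\<Sum>k<n. Q $$ (k,i) * X $$ (k,l)) * Q $$ (l,j))" by (simp add: sum_distrib_right)
  finally show ?thesis .
qed

lemma char_poly_orth:
  fixes Q X :: "real mat"
  assumes Q: "Q \<in> carrier_mat n n" "transpose_mat Q * Q = 1\<^sub>m n" "Q * transpose_mat Q = 1\<^sub>m n"
    and X: "X \<in> carrier_mat n n"
  shows "char_poly (transpose_mat Q * X * Q) = char_poly X"
proof -
  have QT: "transpose_mat Q \<in> carrier_mat n n" using Q by simp
  have "X = Q * (transpose_mat Q * X * Q) * transpose_mat Q"
  proof -
    have "Q * (transpose_mat Q * X * Q) * transpose_mat Q = (Q * transpose_mat Q) * X * (Q * transpose_mat Q)"
      using Q(1) QT X by (simp add: assoc_mult_mat[of _ n n _ n _ n])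
    then show ?thesis using Q X by simp
  qed
  then have "similar_mat_wit X (transpose_mat Q * X * Q) Q (transpose_mat Q)"
    unfolding similar_mat_wit_def Let_def using Q QT X by auto
  then have "similar_mat X (transpose_mat Q * X * Q)" unfolding similar_mat_def by blast
  then show ?thesis by (simp add: char_poly_similar)
qed

lemma sym_rank1_update:
  fixes A :: "real mat"
  assumes A: "A \<in> carrier_mat n n" and sym: "\<And>i j. i < n \<Longrightarrow> j < n \<Longrightarrow> A $$ (i,j) = A $$ (j,i)"
  shows "\<exists>\<mu> y. char_poly A = PP \<mu> {..<n} \<and>
    char_poly (mat n n (\<lambda>(i,j). A $$ (i,j) + \<beta> * v i * v j)) = SQ \<mu> (\<lambda>q. \<beta> * (y q)^2) {..<n}"
proof -
  obtain Q \<mu> where Q: "Q \<in> carrier_mat n n" "transpose_mat Q * Q = 1\<^sub>m n" "Q * transpose_mat Q = 1\<^sub>m n"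
    and D: "transpose_mat Q * A * Q = mat n n (\<lambda>(i,j). if i = j then \<mu> i else 0)"
    using spectral[OF A sym] by blast
  define A' where "A' = mat n n (\<lambda>(i,j). A $$ (i,j) + \<beta> * v i * v j)"
  have A'c: "A' \<in> carrier_mat n n" unfolding A'_def by simp
  define y where "y i = (\<Sum>k<n. Q $$ (k,i) * v k)" for i
  have "char_poly A = char_poly (transpose_mat Q * A * Q)" using char_poly_orth[OF Q A] by simp
  also have "transpose_mat Q * A * Q = rank2_mod n \<mu> 0 0 y y"
    unfolding D rank2_mod_def by (rule eq_matI) auto
  also have "char_poly (rank2_mod n \<mu> 0 0 y y) = PP \<mu> {..<n}"
    unfolding char_poly_rank2 secpoly_def by simp
  finally have 1: "char_poly A = PP \<mu> {..<n}" .
  have "transpose_mat Q * A' * Q = rank2_mod n \<mu> \<beta> 0 y y"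
  proof (rule eq_matI)
    fix i j assume "i < dim_row (rank2_mod n \<mu> \<beta> 0 y y)" "j < dim_col (rank2_mod n \<mu> \<beta> 0 y y)"
    then have ij: "i < n" "j < n" unfolding rank2_mod_def by auto
    have "(transpose_mat Q * A' * Q) $$ (i,j) = (\<Sum>l<n. (\<Sum>k<n. Q $$ (k,i) * A' $$ (k,l)) * Q $$ (l,j))"
      by (rule QTXQ_index[OF Q(1) A'c ij])
    also have "\<dots> = (\<Sum>l<n. (\<Sum>k<n. Q $$ (k,i) * A $$ (k,l)) * Q $$ (l,j)) + \<beta> * (y i * y j)"
    proof -
      have "(\<Sum>l<n. (\<Sum>k<n. Q $$ (k,i) * A' $$ (k,l)) * Q $$ (l,j)) =
          (\<Sum>l<n. (\<Sum>k<n. Q $$ (k,i) * A $$ (k,l)) * Q $$ (l,j) + \<beta> * ((\<Sum>k<n. Q $$ (k,i) * v k) * (v l * Q $$ (l,j))))"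
        by (rule sum.cong) (auto simp: A'_def sum.distrib sum_distrib_left sum_distrib_right algebra_simps)
      also have "\<dots> = (\<Sum>l<n. (\<Sum>k<n. Q $$ (k,i) * A $$ (k,l)) * Q $$ (l,j)) + \<beta> * (y i * (\<Sum>l<n. v l * Q $$ (l,j)))"
        unfolding y_def by (simp add: sum.distrib sum_distrib_left)
      also have "(\<Sum>l<n. v l * Q $$ (l,j)) = y j" unfolding y_def by (simp add: mult.commute)
      finally show ?thesis .
    qed
    also have "(\<Sum>l<n. (\<Sum>k<n. Q $$ (k,i) * A $$ (k,l)) * Q $$ (l,j)) = (transpose_mat Q * A * Q) $$ (i,j)"
      by (rule QTXQ_index[OF Q(1) A ij, symmetric])
    also have "\<dots> = (if i = j then \<mu> i else 0)" unfolding D using ij by simp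
    finally show "(transpose_mat Q * A' * Q) $$ (i,j) = rank2_mod n \<mu> \<beta> 0 y y $$ (i,j)"
      unfolding rank2_mod_def using ij by simp
  qed (use Q A'c in \<open>auto simp: rank2_mod_def\<close>)
  then have "char_poly A' = char_poly (rank2_mod n \<mu> \<beta> 0 y y)" using char_poly_orth[OF Q A'c] by simp
  also have "\<dots> = SQ \<mu> (\<lambda>q. \<beta> * (y q)^2) {..<n}" by (rule char_poly_rank1)
  finally show ?thesis using 1 unfolding A'_def by blast
qed


lemma bounds_chain:
  fixes m :: nat and d va vb :: "nat \<Rightarrow> real" and ba bb :: real
  assumes "ba \<noteq> 0" "bb \<noteq> 0"
  shows "\<exists>a\<le>2. \<forall>A. downset A \<longrightarrow>
     cnt (PP d {..<m}) A \<le> cnt (char_poly (rank2_mod m d ba bb va vb)) A + a \<and>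
     cnt (char_poly (rank2_mod m d ba bb va vb)) A \<le> cnt (PP d {..<m}) A + (2 - a)"
proof -
  define M1 where "M1 = rank2_mod m d ba 0 va vb"
  define M where "M = rank2_mod m d ba bb va vb"
  have M1c: "M1 \<in> carrier_mat m m" unfolding M1_def rank2_mod_def by simp
  have M1sym: "\<And>i j. i < m \<Longrightarrow> j < m \<Longrightarrow> M1 $$ (i,j) = M1 $$ (j,i)"
    unfolding M1_def rank2_mod_def by auto
  have cM1: "char_poly M1 = SQ d (\<lambda>q. ba * (va q)^2) {..<m}" unfolding M1_def by (rule char_poly_rank1)
  have Meq: "M = mat m m (\<lambda>(i,j). M1 $$ (i,j) + bb * vb i * vb j)"
    unfolding M_def M1_def rank2_mod_def by (rule eq_matI) auto
  obtain \<mu> y where my: "char_poly M1 = PP \<mu> {..<m}" "char_poly M = SQ \<mu> (\<lambda>q. bb * (y q)^2) {..<m}"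
    using sym_rank1_update[OF M1c M1sym, of bb vb] Meq by auto
  have step1: "(ba > 0 \<longrightarrow> lo (char_poly M1) (PP d {..<m})) \<and> (ba < 0 \<longrightarrow> lo (PP d {..<m}) (char_poly M1))"
    using R1[of "{..<m}" "\<lambda>q. ba * (va q)^2" d] unfolding cM1
    by (auto simp: mult_nonneg_nonneg mult_nonpos_nonneg)
  have step2: "(bb > 0 \<longrightarrow> lo (char_poly M) (char_poly M1)) \<and> (bb < 0 \<longrightarrow> lo (char_poly M1) (char_poly M))"
    using R1[of "{..<m}" "\<lambda>q. bb * (y q)^2" \<mu>] unfolding my
    by (auto simp: mult_nonneg_nonneg mult_nonpos_nonneg)
  let ?P = "PP d {..<m}" and ?C = "char_poly M1" and ?p = "char_poly M"
  have r: "\<exists>a\<le>2. \<forall>A. downset A \<longrightarrow> cnt ?P A \<le> cnt ?p A + a \<and> cnt ?p A \<le> cnt ?P A + (2 - a)"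
  proof -
    have "ba > 0 \<or> ba < 0" "bb > 0 \<or> bb < 0" using assms by auto
    then consider (pp) "ba > 0" "bb > 0" | (pn) "ba > 0" "bb < 0" | (np) "ba < 0" "bb > 0" | (nn) "ba < 0" "bb < 0"
      by blast
    then show ?thesis
    proof cases
      case pp
      have h1: "\<And>A. downset A \<Longrightarrow> cnt ?C A \<le> cnt ?P A \<and> cnt ?P A \<le> cnt ?C A + 1" using step1 pp unfolding lo_def by blast
      have h2: "\<And>A. downset A \<Longrightarrow> cnt ?p A \<le> cnt ?C A \<and> cnt ?C A \<le> cnt ?p A + 1" using step2 pp unfolding lo_def by blast
      show ?thesis
      proof (intro exI[of _ 2] conjI allI impI)
        fix A assume "downset A"
        from h1[OF this] h2[OF this] show "cnt ?P A \<le> cnt ?p A + 2" "cnt ?p A \<le> cnt ?P A + (2 - 2)" by linarith+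
      qed simp
    next
      case pn
      have h1: "\<And>A. downset A \<Longrightarrow> cnt ?C A \<le> cnt ?P A \<and> cnt ?P A \<le> cnt ?C A + 1" using step1 pn unfolding lo_def by blast
      have h2: "\<And>A. downset A \<Longrightarrow> cnt ?C A \<le> cnt ?p A \<and> cnt ?p A \<le> cnt ?C A + 1" using step2 pn unfolding lo_def by blast
      show ?thesis
      proof (intro exI[of _ 1] conjI allI impI)
        fix A assume "downset A"
        from h1[OF this] h2[OF this] show "cnt ?P A \<le> cnt ?p A + 1" "cnt ?p A \<le> cnt ?P A + (2 - 1)" by linarith+
      qed simp
    next
      case np
      have h1: "\<And>A. downset A \<Longrightarrow> cnt ?P A \<le> cnt ?C A \<and> cnt ?C A \<le> cnt ?P A + 1" using step1 np unfolding lo_def by blast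
      have h2: "\<And>A. downset A \<Longrightarrow> cnt ?p A \<le> cnt ?C A \<and> cnt ?C A \<le> cnt ?p A + 1" using step2 np unfolding lo_def by blast
      show ?thesis
      proof (intro exI[of _ 1] conjI allI impI)
        fix A assume "downset A"
        from h1[OF this] h2[OF this] show "cnt ?P A \<le> cnt ?p A + 1" "cnt ?p A \<le> cnt ?P A + (2 - 1)" by linarith+
      qed simp
    next
      case nn
      have h1: "\<And>A. downset A \<Longrightarrow> cnt ?P A \<le> cnt ?C A \<and> cnt ?C A \<le> cnt ?P A + 1" using step1 nn unfolding lo_def by blast
      have h2: "\<And>A. downset A \<Longrightarrow> cnt ?C A \<le> cnt ?p A \<and> cnt ?p A \<le> cnt ?C A + 1" using step2 nn unfolding lo_def by blast
      show ?thesis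
      proof (intro exI[of _ 0] conjI allI impI)
        fix A assume "downset A"
        from h1[OF this] h2[OF this] show "cnt ?P A \<le> cnt ?p A + 0" "cnt ?p A \<le> cnt ?P A + (2 - 0)" by linarith+
      qed simp
    qed
  qed
  then show ?thesis unfolding M_def .
qed


lemma Pi_sign:
  fixes d :: "nat \<Rightarrow> real"
  assumes mono: "\<And>p q. p < q \<Longrightarrow> q < m \<Longrightarrow> d p < d q" and i: "i < m"
  shows "(-1)^(m - 1 - i) * (\<Prod>q\<in>{..<m}-{i}. d i - d q) > 0"
proof -
  have split: "{..<m}-{i} = {..<i} \<union> {i<..<m}" using i by auto
  have "(\<Prod>q\<in>{..<m}-{i}. d i - d q) = (\<Prod>q\<in>{..<i}. d i - d q) * (\<Prod>q\<in>{i<..<m}. d i - d q)"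
    unfolding split by (rule prod.union_disjoint) auto
  moreover have "(\<Prod>q\<in>{..<i}. d i - d q) > 0" using mono i by (intro prod_pos) auto
  moreover have "(-1)^card {i<..<m} * (\<Prod>q\<in>{i<..<m}. d i - d q) > 0"
    by (rule prod_neg_sign) (use mono in auto)
  moreover have "card {i<..<m} = m - 1 - i" by simp
  ultimately show ?thesis by (metis mult.left_commute mult_pos_pos)
qed

theorem lemma2:
  fixes m :: nat and d v1 v2 :: "nat \<Rightarrow> real" and \<beta>1 \<beta>2 :: real
    and J1 J2 J3 :: "nat set" and j k :: nat
  assumes "m \<ge> 2"
    and "\<And>p q. p < q \<Longrightarrow> q < m \<Longrightarrow> d p < d q"
    and "\<beta>1 \<noteq> 0" and "\<beta>2 \<noteq> 0"
    and "J1 \<union> J2 \<union> J3 = {..<m}"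
    and "J1 \<inter> J2 = {}" and "J1 \<inter> J3 = {}" and "J2 \<inter> J3 = {}"
    and "\<And>q. q \<in> J3 \<Longrightarrow> v1 q = 0"
    and "\<And>q. q \<in> J1 \<Longrightarrow> v2 q = 0"
    and "\<And>i. i < m \<Longrightarrow> \<not> eigenvalue (rank2_mod m d \<beta>1 \<beta>2 v1 v2) (d i)"
    and "j + 1 < m"
    and "1 \<le> k" and "j + k < m"
  shows "(g_plus m d \<beta>1 \<beta>2 v1 v2 j * g_minus m d \<beta>1 \<beta>2 v1 v2 (j + k) < 0 \<longrightarrow>
            eig_count (rank2_mod m d \<beta>1 \<beta>2 v1 v2) (I_int d j k) = k)
       \<and> (g_plus m d \<beta>1 \<beta>2 v1 v2 j * g_minus m d \<beta>1 \<beta>2 v1 v2 (j + k) > 0 \<longrightarrow>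
            eig_count (rank2_mod m d \<beta>1 \<beta>2 v1 v2) (I_int d j k) \<in> {k - 1, k + 1})"
proof -
  note mono = assms(2)
  define M where "M = rank2_mod m d \<beta>1 \<beta>2 v1 v2"
  define p where "p = char_poly M"
  define P where "P = PP d {..<m}"
  define g where "g = g_plus m d \<beta>1 \<beta>2 v1 v2"
  have Mc: "M \<in> carrier_mat m m" unfolding M_def rank2_mod_def by simp
  have p0: "p \<noteq> 0" using degree_monic_char_poly[OF Mc] unfolding p_def by auto
  have nr: "poly p (d i) \<noteq> 0" if "i < m" for i
    using assms(11)[OF that] eigenvalue_root_char_poly[OF Mc] unfolding p_def M_def by simp
  have lt_iff: "d q < d i \<longleftrightarrow> q < i" if "q < m" "i < m" for q i
    using mono that by (metis linorder_neqE_nat not_less_iff_gr_or_eq)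
  have le_iff: "d q \<le> d i \<longleftrightarrow> q \<le> i" if "q < m" "i < m" for q i
    using lt_iff[OF that(2,1)] by (simp add: not_less[symmetric])
  have cP_lt: "cnt P {..<d i} = i" if "i < m" for i
  proof -
    have "{q\<in>{..<m}. d q \<in> {..<d i}} = {..<i}" using lt_iff that by auto
    then show ?thesis unfolding P_def by (simp add: cnt_PP)
  qed
  have cP_le: "cnt P {..d i} = Suc i" if "i < m" for i
  proof -
    have "{q\<in>{..<m}. d q \<in> {..d i}} = {..i}" using le_iff that by auto
    then show ?thesis unfolding P_def by (simp add: cnt_PP)
  qed
  have cp_eq: "cnt p {..<d i} = cnt p {..d i}" if "i < m" for i
  proof -
    have "{r. poly p r = 0 \<and> r \<in> {..<d i}} = {r. poly p r = 0 \<and> r \<in> {..d i}}"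
      using nr[OF that] by (auto simp: less_le)
    then show ?thesis unfolding cnt_def by simp
  qed
  obtain a where a: "a \<le> 2" and ab: "\<And>A. downset A \<Longrightarrow> cnt P A \<le> cnt p A + a \<and> cnt p A \<le> cnt P A + (2 - a)"
    using bounds_chain[where m=m and d=d and va=v1 and vb=v2, OF assms(3,4)] unfolding P_def p_def M_def by blast
  have Lb: "Suc i \<le> cnt p {..<d i} + a" "cnt p {..<d i} \<le> i + (2 - a)" if "i < m" for i
  proof -
    show "Suc i \<le> cnt p {..<d i} + a" using ab[OF downset_le, of "d i"] cP_le[OF that] cp_eq[OF that] by simp
    show "cnt p {..<d i} \<le> i + (2 - a)" using ab[OF downset_lt, of "d i"] cP_lt[OF that] by simp
  qed
  define C where "C = eig_count M (I_int d j k)"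
  have jm: "j < m" "j + k < m" using assms by auto
  have djk: "d j < d (j + k)" using mono assms by simp
  have C_cnt: "C = cnt p {d j<..<d (j+k)}"
  proof -
    have noD: "x \<in> I_int d j k" if x: "poly p x = 0" "d j < x" "x < d (j+k)" for x
    proof -
      have "x \<noteq> d i" if "j < i" "i < j + k" for i
        using nr[of i] x(1) that jm by auto
      then show ?thesis using x unfolding I_int_def by auto
    qed
    have "{x \<in> I_int d j k. poly p x = 0} = {r. poly p r = 0 \<and> r \<in> {d j<..<d (j+k)}}"
    proof
      show "{x \<in> I_int d j k. poly p x = 0} \<subseteq> {r. poly p r = 0 \<and> r \<in> {d j<..<d (j+k)}}"
        unfolding I_int_def by auto
      show "{r. poly p r = 0 \<and> r \<in> {d j<..<d (j+k)}} \<subseteq> {x \<in> I_int d j k. poly p x = 0}"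
        using noD by auto
    qed
    then show ?thesis unfolding C_def eig_count_def cnt_def p_def by simp
  qed
  have C_diff: "cnt p {..<d (j+k)} = cnt p {..d j} + C"
  proof -
    have "{..<d (j+k)} = {..d j} \<union> {d j<..<d (j+k)}" using djk by auto
    moreover have "cnt p ({..d j} \<union> {d j<..<d (j+k)}) = cnt p {..d j} + cnt p {d j<..<d (j+k)}"
      by (rule cnt_union[OF p0]) auto
    ultimately show ?thesis unfolding C_cnt by simp
  qed
  have Cb: "k - 1 \<le> C" "C \<le> k + 1"
    using Lb[OF jm(1)] Lb[OF jm(2)] C_diff cp_eq[OF jm(1)] a by linarith+
  have par: "(poly p (d j) * poly p (d (j+k)) > 0) \<longleftrightarrow> even C"
    unfolding C_cnt by (rule cnt_parity[OF p0 djk nr[OF jm(1)] nr[OF jm(2)]])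
  define T where "T = (\<Prod>q\<in>{..<m}-{j}. d j - d q) * (\<Prod>q\<in>{..<m}-{j+k}. d (j+k) - d q)"
  have pv: "poly p (d j) * poly p (d (j+k)) = (g j * g (j+k)) * T"
  proof -
    have inj: "inj_on d {..<m}"
      by (rule inj_onI) (metis lessThan_iff linorder_neqE_nat mono order_less_irrefl)
    show ?thesis unfolding p_def M_def g_def T_def
      using poly_char_rank2_at[OF inj jm(1), of \<beta>1 \<beta>2 v1 v2] poly_char_rank2_at[OF inj jm(2), of \<beta>1 \<beta>2 v1 v2]
      by (simp add: algebra_simps)
  qed
  have Tsign: "(-1)^k * T > 0"
  proof -
    have s1: "(-1)^(m - 1 - j) * (\<Prod>q\<in>{..<m}-{j}. d j - d q) > 0" by (rule Pi_sign[OF mono jm(1)])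
    have s2: "(-1)^(m - 1 - (j+k)) * (\<Prod>q\<in>{..<m}-{j+k}. d (j+k) - d q) > 0" by (rule Pi_sign[OF mono jm(2)])
    have e: "(-1::real)^(m - 1 - j) = (-1)^(m - 1 - (j+k)) * (-1)^k"
    proof -
      have "m - 1 - j = (m - 1 - (j+k)) + k" using jm by simp
      then show ?thesis by (simp add: power_add)
    qed
    have "0 < ((-1)^(m - 1 - j) * (\<Prod>q\<in>{..<m}-{j}. d j - d q)) * ((-1)^(m - 1 - (j+k)) * (\<Prod>q\<in>{..<m}-{j+k}. d (j+k) - d q))"
      using s1 s2 by (rule mult_pos_pos)
    also have "\<dots> = ((-1)^(m - 1 - (j+k)) * (-1)^(m - 1 - (j+k))) * ((-1)^k * T)"
      unfolding e T_def by (simp add: algebra_simps)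
    also have "(-1::real)^(m - 1 - (j+k)) * (-1)^(m - 1 - (j+k)) = 1"
      by (simp add: power_mult_distrib[symmetric])
    finally show ?thesis by simp
  qed
  have Tk: "T > 0 \<longleftrightarrow> even k" "T < 0 \<longleftrightarrow> odd k"
    using Tsign by (cases "even k"; auto simp: minus_one_power_iff)+
  have gm: "g_minus m d \<beta>1 \<beta>2 v1 v2 (j + k) = - g (j + k)" unfolding g_minus_def g_def ..
  show ?thesis
  proof (intro conjI impI)
    assume "g_plus m d \<beta>1 \<beta>2 v1 v2 j * g_minus m d \<beta>1 \<beta>2 v1 v2 (j + k) < 0"
    then have G: "g j * g (j+k) > 0" unfolding gm g_def by simp
    have "even C \<longleftrightarrow> even k" unfolding par[symmetric] pv using G Tk
      by (metis mult_pos_pos mult_pos_neg not_less_iff_gr_or_eq zero_less_mult_iff)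
    then have "C = k" using Cb assms(13) by presburger
    then show "eig_count (rank2_mod m d \<beta>1 \<beta>2 v1 v2) (I_int d j k) = k" unfolding C_def M_def .
  next
    assume "g_plus m d \<beta>1 \<beta>2 v1 v2 j * g_minus m d \<beta>1 \<beta>2 v1 v2 (j + k) > 0"
    then have G: "g j * g (j+k) < 0" unfolding gm g_def by simp
    have "even C \<longleftrightarrow> odd k" unfolding par[symmetric] pv using G Tk
      by (metis mult_neg_neg mult_neg_pos not_less_iff_gr_or_eq zero_less_mult_iff)
    then have "C = k - 1 \<or> C = k + 1" using Cb assms(13) by presburger
    then show "eig_count (rank2_mod m d \<beta>1 \<beta>2 v1 v2) (I_int d j k) \<in> {k - 1, k + 1}" unfolding C_def M_def by auto
  qed
qed


end
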